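(* Let $B$ be an S-open subset of ${}^*\mathbb{C}^n$, $a\in B$ a bounded point, and $f:B\to{}^*\mathbb{C}$ an internal holomorphic function on $B$ which is bounded at every point of the halo $\mu(a)$. Then there exists an S-open neighbourhood $V$ of $a$ such that: (i) $f$ is S-continuous at every point of $V$; (ii) there is a holomorphic function ${}^\circ f:{}^\circ V\to\mathbb{C}$ such that $f(z)\approx{}^\circ f({}^\circ z)$ for the points $z\in V$ with ${}^\circ z\in{}^\circ V$, and ${}^\circ(\partial^\alpha f)=\partial^\alpha({}^\circ f)$ for every $\alpha\in\mathbb{N}^n$; (iii) if ${}^\circ f$ is not constant on ${}^\circ V$, then $f(\mu(a))=\mu(f(a))$.
   Context: ${}^*\mathbb{C}$ is the ultrapower of $\mathbb{C}$ by a nonprincipal ultrafilter $\mathcal{U}$ on $\mathbb{N}$. A point of ${}^*\mathbb{C}^n$ is bounded if its coordinates have modulus $\le r$ for some standard real $r$; bounded points $z$ have a standard part ${}^\circ z\in\mathbb{C}^n$; $x\approx y$ means $|x-y|$ is infinitesimal, and $\mu(x)=\{y: y\approx x\}$. The S-topology on ${}^*\mathbb{C}^n$ has basis the S-balls $\{q: {}^\circ|q-p|<r\}$ ($p\in{}^*\mathbb{C}^n$, $r>0$ standard real). An internal function $f=[f_i]$ on an internal set $D=[D_i]\subset{}^*\mathbb{C}^n$ is internal holomorphic if $\{i: D_i \text{ open and } f_i \text{ holomorphic on } D_i\}\in\mathcal{U}$; $\partial^\alpha f:=[\partial^\alpha f_i]$. $f$ is S-continuous at $z$ if $f(\mu(z))\subset\mu(f(z))$.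 For $V\subset{}^*\mathbb{C}^n$, ${}^\circ V=\{x\in\mathbb{C}^n:\mu(x)\cap V\neq\emptyset\}$. For a function $g$ bounded and S-continuous near a standard point $x$, ${}^\circ g(x)$ is the standard part of $g(x)$. *)

theory Defs
  imports "HOL-Analysis.Analysis"
begin

definition nonprincipal_ultrafilter :: "nat set set \<Rightarrow> bool" where
  "nonprincipal_ultrafilter U \<longleftrightarrow>
     (\<forall>A B. A \<in> U \<longrightarrow> A \<subseteq> B \<longrightarrow> B \<in> U) \<and>
     (\<forall>A B. A \<in> U \<longrightarrow> B \<in> U \<longrightarrow> A \<inter> B \<in> U) \<and>
     {} \<notin> U \<and>
     (\<forall>A. A \<in> U \<or> - A \<in> U) \<and>
     (\<forall>A. finite A \<longrightarrow> A \<notin> U)"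

text \<open>Elements of the ultrapower are represented by sequences; two sequences
  represent the same element iff they agree on a set in U.\<close>
definition eqU :: "nat set set \<Rightarrow> (nat \<Rightarrow> 'a) \<Rightarrow> (nat \<Rightarrow> 'a) \<Rightarrow> bool" where
  "eqU U x y \<longleftrightarrow> {i. x i = y i} \<in> U"

definition hstar :: "'a \<Rightarrow> nat \<Rightarrow> 'a" where
  "hstar x = (\<lambda>_. x)"

definition hbounded :: "nat set set \<Rightarrow> (nat \<Rightarrow> 'a::real_normed_vector) \<Rightarrow> bool" where
  "hbounded U s \<longleftrightarrow> (\<exists>r::real. {i. norm (s i) \<le> r} \<in> U)"

definition hinfinitesimal :: "nat set set \<Rightarrow> (nat \<Rightarrow> 'a::real_normed_vector) \<Rightarrow> bool" where
  "hinfinitesimal U s \<longleftrightarrow> (\<forall>e::real. e > 0 \<longrightarrow> {i. norm (s i) < e} \<in> U)"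

definition happrox :: "nat set set \<Rightarrow> (nat \<Rightarrow> 'a::real_normed_vector) \<Rightarrow> (nat \<Rightarrow> 'a) \<Rightarrow> bool" where
  "happrox U x y \<longleftrightarrow> hinfinitesimal U (\<lambda>i. x i - y i)"

definition hst :: "nat set set \<Rightarrow> (nat \<Rightarrow> 'a::real_normed_vector) \<Rightarrow> 'a" where
  "hst U s = (THE c. happrox U s (hstar c))"

definition halo :: "nat set set \<Rightarrow> (nat \<Rightarrow> 'a::real_normed_vector) \<Rightarrow> (nat \<Rightarrow> 'a) set" where
  "halo U x = {y. happrox U y x}"

definition Sball :: "nat set set \<Rightarrow> (nat \<Rightarrow> 'a::real_normed_vector) \<Rightarrow> real \<Rightarrow> (nat \<Rightarrow> 'a) set" where
  "Sball U p r = {q. hbounded U (\<lambda>i. norm (q i - p i)) \<and> hst U (\<lambda>i. norm (q i - p i)) < r}"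

definition Sopen :: "nat set set \<Rightarrow> (nat \<Rightarrow> 'a::real_normed_vector) set \<Rightarrow> bool" where
  "Sopen U B \<longleftrightarrow> (\<forall>p\<in>B. \<exists>r>0. Sball U p r \<subseteq> B)"

definition shadow :: "nat set set \<Rightarrow> (nat \<Rightarrow> 'a::real_normed_vector) set \<Rightarrow> 'a set" where
  "shadow U V = {x. halo U (hstar x) \<inter> V \<noteq> {}}"

definition internal_set :: "nat set set \<Rightarrow> (nat \<Rightarrow> 'a set) \<Rightarrow> (nat \<Rightarrow> 'a) set" where
  "internal_set U D = {z. {i. z i \<in> D i} \<in> U}"

definition happ :: "(nat \<Rightarrow> 'a \<Rightarrow> 'b) \<Rightarrow> (nat \<Rightarrow> 'a) \<Rightarrow> nat \<Rightarrow> 'b" where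
  "happ f z = (\<lambda>i. f i (z i))"

definition Scont_at :: "nat set set \<Rightarrow> (nat \<Rightarrow> 'a) set \<Rightarrow> (nat \<Rightarrow> 'a::real_normed_vector \<Rightarrow> 'b::real_normed_vector)
    \<Rightarrow> (nat \<Rightarrow> 'a) \<Rightarrow> bool" where
  "Scont_at U Dom f z \<longleftrightarrow> (\<forall>w\<in>Dom. happrox U w z \<longrightarrow> happrox U (happ f w) (happ f z))"

definition holo_on :: "(complex ^ 'n) set \<Rightarrow> (complex ^ 'n \<Rightarrow> complex) \<Rightarrow> bool" where
  "holo_on S g \<longleftrightarrow> (\<forall>z\<in>S. \<exists>L. (g has_derivative L) (at z) \<and> (\<forall>c v. L (c *s v) = c * L v))"

definition internal_holomorphic ::
  "nat set set \<Rightarrow> (nat \<Rightarrow> (complex ^ 'n) set) \<Rightarrow> (nat \<Rightarrow> complex ^ 'n \<Rightarrow> complex) \<Rightarrow> bool" where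
  "internal_holomorphic U D f \<longleftrightarrow> {i. open (D i) \<and> holo_on (D i) (f i)} \<in> U"

definition cpartial :: "'n::finite \<Rightarrow> (complex ^ 'n \<Rightarrow> complex) \<Rightarrow> complex ^ 'n \<Rightarrow> complex" where
  "cpartial j g z = deriv (\<lambda>w. g (z + (\<chi> k. if k = j then w else 0))) 0"

primrec pd_list :: "('n::finite \<Rightarrow> nat) \<Rightarrow> 'n list \<Rightarrow> (complex ^ 'n \<Rightarrow> complex) \<Rightarrow> complex ^ 'n \<Rightarrow> complex" where
  "pd_list \<alpha> [] g = g"
| "pd_list \<alpha> (j # js) g = (cpartial j ^^ \<alpha> j) (pd_list \<alpha> js g)"

definition pdiff :: "('n::finite \<Rightarrow> nat) \<Rightarrow> (complex ^ 'n \<Rightarrow> complex) \<Rightarrow> complex ^ 'n \<Rightarrow> complex" where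
  "pdiff \<alpha> g = pd_list \<alpha> (SOME xs. distinct xs \<and> set xs = UNIV) g"

end

theory Submission
  imports Defs "HOL-Complex_Analysis.Complex_Analysis"
begin

lemma norm_smult_vec: "norm (c *s (x::complex^'n)) = norm c * norm x"
proof -
  have "norm (c *s x) = L2_set (\<lambda>i. norm c * norm (x $ i)) UNIV"
    by (simp add: norm_vec_def norm_mult)
  also have "\<dots> = norm c * L2_set (\<lambda>i. norm (x $ i)) UNIV"
    by (simp add: L2_set_right_distrib)
  finally show ?thesis by (simp add: norm_vec_def)
qed

lemma onevar_bounds:
  fixes \<phi> :: "complex \<Rightarrow> complex"
  assumes hol: "\<phi> holomorphic_on ball 0 r" and bd: "\<And>t. t \<in> ball 0 r \<Longrightarrow> norm (\<phi> t) \<le> M"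
    and r: "r > 0"
  shows "\<And>s. norm s \<le> r/2 \<Longrightarrow> norm (deriv \<phi> s) \<le> 4*M/r"
    and "\<And>s. norm s \<le> r/2 \<Longrightarrow> norm (deriv (deriv \<phi>) s) \<le> 32*M/r^2"
    and "\<And>t. norm t \<le> r/2 \<Longrightarrow> norm (\<phi> t - \<phi> 0) \<le> 4*M*norm t/r"
    and "\<And>t. norm t \<le> r/2 \<Longrightarrow> norm (\<phi> t - \<phi> 0 - deriv \<phi> 0 * t) \<le> 32*M*(norm t)^2/r^2"
proof -
  have sub: "cball s (r/4) \<subseteq> ball 0 r" if "norm s \<le> r/2" for s
  proof
    fix x assume "x \<in> cball s (r/4)"
    then have "norm (x - s) \<le> r/4" by (simp add: dist_norm norm_minus_commute)
    moreover have "norm x \<le> norm s + norm (x - s)" by (metis add.commute diff_add_cancel norm_triangle_ineq)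
    ultimately show "x \<in> ball 0 r" using that r by simp
  qed
  have cauchy: "norm ((deriv ^^ n) \<phi> s) \<le> fact n * M / (r/4)^n" if "norm s \<le> r/2" for n s
  proof (rule Cauchy_inequality)
    show "\<phi> holomorphic_on ball s (r/4)" using hol sub[OF that] by (meson ball_subset_cball holomorphic_on_subset order_trans)
    show "continuous_on (cball s (r/4)) \<phi>" using holomorphic_on_imp_continuous_on[OF hol] sub[OF that]
      using continuous_on_subset by blast
    show "0 < r/4" using r by simp
    fix x assume "cmod (s - x) = r/4" then have "x \<in> ball 0 r" using sub[OF that] by (auto simp: dist_norm)
    then show "norm (\<phi> x) \<le> M" by (rule bd)
  qed
  show d1: "norm (deriv \<phi> s) \<le> 4*M/r" if "norm s \<le> r/2" for s
    using cauchy[OF that, of 1] by (simp add: mult.commute)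
  show d2: "norm (deriv (deriv \<phi>) s) \<le> 32*M/r^2" if "norm s \<le> r/2" for s
  proof -
    have e: "fact 2 * M / (r/4)^2 = 32*M/r^2" using r by (simp add: field_simps power2_eq_square)
    have "(deriv ^^ 2) \<phi> = deriv (deriv \<phi>)" by (simp add: numeral_2_eq_2)
    then show ?thesis using cauchy[OF that, of 2] e by simp
  qed
  have inball: "s \<in> ball 0 r" if "s \<in> cball 0 (r/2)" for s using that r by auto
  have D1: "(\<phi> has_field_derivative deriv \<phi> s) (at s within cball 0 (r/2))" if "s \<in> cball 0 (r/2)" for s
    using hol inball[OF that]
    by (meson DERIV_deriv_iff_field_differentiable has_field_derivative_at_within holomorphic_on_imp_differentiable_at open_ball)
  have hol2: "deriv \<phi> holomorphic_on ball 0 r" using hol by (simp add: holomorphic_deriv)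
  have D2: "(deriv \<phi> has_field_derivative deriv (deriv \<phi>) s) (at s within cball 0 (r/2))" if "s \<in> cball 0 (r/2)" for s
    using hol2 inball[OF that]
    by (meson DERIV_deriv_iff_field_differentiable has_field_derivative_at_within holomorphic_on_imp_differentiable_at open_ball)
  show "norm (\<phi> t - \<phi> 0) \<le> 4*M*norm t/r" if "norm t \<le> r/2" for t
    using field_differentiable_bound[OF convex_cball D1, of "4*M/r" t 0] d1 that r by auto
  show "norm (\<phi> t - \<phi> 0 - deriv \<phi> 0 * t) \<le> 32*M*(norm t)^2/r^2" if tt: "norm t \<le> r/2" for t
  proof -
    have db: "norm (deriv \<phi> s - deriv \<phi> 0) \<le> 32*M/r^2 * norm s" if "s \<in> cball 0 (r/2)" for s
      using field_differentiable_bound[OF convex_cball D2, of "32*M/r^2" s 0] d2 that r by auto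
    have sub2: "cball 0 (norm t) \<subseteq> cball 0 (r/2)" using tt by auto
    have D3: "((\<lambda>s. \<phi> s - deriv \<phi> 0 * s) has_field_derivative (deriv \<phi> s - deriv \<phi> 0)) (at s within cball 0 (norm t))"
      if "s \<in> cball 0 (norm t)" for s
    proof -
      have "s \<in> cball 0 (r/2)" using that tt by auto
      then have "(\<phi> has_field_derivative deriv \<phi> s) (at s within cball 0 (norm t))"
        using D1[of s] sub2 by (meson has_field_derivative_subset)
      then show ?thesis by (auto intro!: derivative_eq_intros)
    qed
    have "norm ((\<phi> t - deriv \<phi> 0 * t) - (\<phi> 0 - deriv \<phi> 0 * 0)) \<le> (32*M/r^2 * norm t) * norm (t - 0)"
    proof (rule field_differentiable_bound[OF convex_cball D3])
      fix s :: complex assume s: "s \<in> cball 0 (norm t)"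
      have M0: "M \<ge> 0" using bd[of 0] r by (smt (verit) centre_in_ball norm_ge_zero)
      have "norm s \<le> norm t" using s by auto
      then show "norm (deriv \<phi> s - deriv \<phi> 0) \<le> 32*M/r^2 * norm t"
        proof -
        have "norm (deriv \<phi> s - deriv \<phi> 0) \<le> 32*M/r^2 * norm s" using db[of s] s tt by auto
        also have "\<dots> \<le> 32*M/r^2 * norm t" using M0 r \<open>norm s \<le> norm t\<close> by (intro mult_left_mono) auto
        finally show ?thesis .
      qed
    qed auto
    then show ?thesis by (simp add: power2_eq_square algebra_simps)
  qed
qed


definition Dv :: "(complex^'n \<Rightarrow> complex) \<Rightarrow> complex^'n \<Rightarrow> complex^'n \<Rightarrow> complex" where
  "Dv F y u = deriv (\<lambda>t. F (y + t *s u)) 0"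

definition ev :: "'n \<Rightarrow> complex^'n" where "ev j = (\<chi> k. if k = j then 1 else 0)"

lemma cpartial_Dv: "cpartial j F z = Dv F z (ev j)"
proof -
  have "(\<lambda>w. F (z + (\<chi> k. if k = j then w else 0))) = (\<lambda>w. F (z + w *s ev j))"
    by (intro ext arg_cong[where f=F] arg_cong[where f="\<lambda>v. z + v"]) (simp add: vec_eq_iff ev_def)
  then show ?thesis by (simp add: cpartial_def Dv_def)
qed

lemma bl_smult_line: "bounded_linear (\<lambda>t::complex. t *s (u::complex^'n))"
  unfolding linear_conv_bounded_linear[symmetric]
  by (rule linearI) (simp_all add: vec_eq_iff algebra_simps mult_scaleR_left)

lemma line_deriv:
  fixes F :: "complex^'n \<Rightarrow> complex"
  assumes "(F has_derivative L) (at (y + t0 *s u))" "\<And>c v. L (c *s v) = c * L v"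
  shows "((\<lambda>t. F (y + t *s u)) has_field_derivative L u) (at t0)"
proof -
  have "((\<lambda>t. y + t *s u) has_derivative (\<lambda>t. t *s u)) (at t0)"
    using bl_smult_line[of u] by (auto intro!: derivative_eq_intros bounded_linear_imp_has_derivative)
  from has_derivative_compose[OF this assms(1)]
  have "((\<lambda>t. F (y + t *s u)) has_derivative (\<lambda>t. L (t *s u))) (at t0)" by (simp add: o_def)
  moreover have "(\<lambda>t. L (t *s u)) = (*) (L u)" using assms(2) by (auto simp: mult.commute)
  ultimately show ?thesis by (simp add: has_field_derivative_def)
qed

lemma holo_on_line:
  fixes F :: "complex^'n \<Rightarrow> complex"
  assumes "holo_on S F"
  shows "(\<lambda>t. F (y + t *s u)) holomorphic_on {t. y + t *s u \<in> S}"
  unfolding holomorphic_on_def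
proof
  fix t assume "t \<in> {t. y + t *s u \<in> S}"
  then obtain L where "(F has_derivative L) (at (y + t *s u))" "\<forall>c v. L (c *s v) = c * L v"
    using assms unfolding holo_on_def by blast
  then have "((\<lambda>t. F (y + t *s u)) has_field_derivative L u) (at t)" by (intro line_deriv) auto
  then show "(\<lambda>t. F (y + t *s u)) field_differentiable at t within {t. y + t *s u \<in> S}"
    by (meson field_differentiable_at_within field_differentiable_def)
qed

lemma holo_Dv:
  fixes F :: "complex^'n \<Rightarrow> complex"
  assumes "holo_on S F" "y \<in> S"
  shows "(F has_derivative Dv F y) (at y)" "\<And>c v. Dv F y (c *s v) = c * Dv F y v"
proof -
  obtain L where L: "(F has_derivative L) (at y)" "\<forall>c v. L (c *s v) = c * L v"
    using assms unfolding holo_on_def by blast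
  have "Dv F y u = L u" for u
  proof -
    have "((\<lambda>t. F (y + t *s u)) has_field_derivative L u) (at 0)" using L by (intro line_deriv) auto
    then show ?thesis unfolding Dv_def by (rule DERIV_imp_deriv)
  qed
  then have "Dv F y = L" by auto
  then show "(F has_derivative Dv F y) (at y)" "\<And>c v. Dv F y (c *s v) = c * Dv F y v" using L by auto
qed

lemma sv_bounds:
  fixes F :: "complex^'n \<Rightarrow> complex"
  assumes hol: "holo_on (ball y r) F" and bd: "\<And>w. w \<in> ball y r \<Longrightarrow> norm (F w) \<le> M" and r: "r > 0"
  shows "norm (Dv F y h) \<le> 4*M*norm h/r"
    and "norm h \<le> r/2 \<Longrightarrow> norm (F (y+h) - F y) \<le> 4*M*norm h/r"
    and "norm h \<le> r/2 \<Longrightarrow> norm (F (y+h) - F y - Dv F y h) \<le> 32*M*(norm h)^2/r^2"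
proof -
  have M0: "M \<ge> 0" using bd[of y] r by (smt (verit) centre_in_ball norm_ge_zero)
  show "norm (Dv F y h) \<le> 4*M*norm h/r"
     and "norm h \<le> r/2 \<Longrightarrow> norm (F (y+h) - F y) \<le> 4*M*norm h/r"
    and "norm h \<le> r/2 \<Longrightarrow> norm (F (y+h) - F y - Dv F y h) \<le> 32*M*(norm h)^2/r^2"
  proof -
    consider "h = 0" | "h \<noteq> 0" by blast
    then have "norm (Dv F y h) \<le> 4*M*norm h/r \<and> (norm h \<le> r/2 \<longrightarrow> norm (F (y+h) - F y) \<le> 4*M*norm h/r)
        \<and> (norm h \<le> r/2 \<longrightarrow> norm (F (y+h) - F y - Dv F y h) \<le> 32*M*(norm h)^2/r^2)"
    proof cases
      case 1 then show ?thesis by (simp add: Dv_def)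
    next
      case 2
      define \<rho> where "\<rho> = r / norm h"
      have \<rho>: "\<rho> > 0" using 2 r by (simp add: \<rho>_def)
      define \<phi> where "\<phi> = (\<lambda>t. F (y + t *s h))"
      have sub: "ball 0 \<rho> \<subseteq> {t. y + t *s h \<in> ball y r}"
      proof
        fix t :: complex assume "t \<in> ball 0 \<rho>"
        then have "norm t * norm h < r" using 2 by (simp add: \<rho>_def field_simps)
        then show "t \<in> {t. y + t *s h \<in> ball y r}" by (simp add: dist_norm norm_smult_vec)
      qed
      have hol1: "\<phi> holomorphic_on ball 0 \<rho>"
        unfolding \<phi>_def using holomorphic_on_subset[OF holo_on_line[OF hol] sub] .
      have bd1: "\<And>t. t \<in> ball 0 \<rho> \<Longrightarrow> norm (\<phi> t) \<le> M" using sub bd by (auto simp: \<phi>_def)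
      note ob = onevar_bounds[OF hol1 bd1 \<rho>]
      have dv: "Dv F y h = deriv \<phi> 0" by (simp add: Dv_def \<phi>_def)
      have p1: "\<phi> 1 = F (y+h)" "\<phi> 0 = F y" by (simp_all add: \<phi>_def)
      have c1: "norm (Dv F y h) \<le> 4*M*norm h/r"
        using ob(1)[of 0] \<rho> 2 unfolding dv by (simp add: \<rho>_def field_simps)
      moreover have "norm (F (y+h) - F y) \<le> 4*M*norm h/r" if "norm h \<le> r/2"
      proof -
        have "norm (1::complex) \<le> \<rho>/2" using that 2 by (simp add: \<rho>_def field_simps)
        then show ?thesis using ob(3)[of 1] 2 unfolding p1 by (simp add: \<rho>_def field_simps)
      qed
      moreover have "norm (F (y+h) - F y - Dv F y h) \<le> 32*M*(norm h)^2/r^2" if "norm h \<le> r/2"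
      proof -
        have "norm (1::complex) \<le> \<rho>/2" using that 2 by (simp add: \<rho>_def field_simps)
        then show ?thesis using ob(4)[of 1] 2 unfolding p1 dv by (simp add: \<rho>_def field_simps)
      qed
      ultimately show ?thesis by blast
    qed
    then show "norm (Dv F y h) \<le> 4*M*norm h/r"
      and "norm h \<le> r/2 \<Longrightarrow> norm (F (y+h) - F y) \<le> 4*M*norm h/r"
      and "norm h \<le> r/2 \<Longrightarrow> norm (F (y+h) - F y - Dv F y h) \<le> 32*M*(norm h)^2/r^2" by blast+
  qed
qed


lemma scaleR_smult_vec: "c *\<^sub>R (v::complex^'n) = complex_of_real c *s v"
proof (rule vec_eq_iff[THEN iffD2], rule allI)
  fix i show "(c *\<^sub>R v) $ i = (complex_of_real c *s v) $ i"
    by (simp only: vector_scaleR_component vector_smult_component) (simp add: scaleR_conv_of_real)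
qed

lemma quad_deriv:
  fixes G :: "'a::real_normed_vector \<Rightarrow> 'b::real_normed_vector"
  assumes bl: "bounded_linear L" and d: "\<delta> > 0"
    and q: "\<And>h. norm h \<le> \<delta> \<Longrightarrow> norm (G (y+h) - G y - L h) \<le> K * (norm h)^2"
  shows "(G has_derivative L) (at y)"
  unfolding has_derivative_at_alt
proof (intro conjI bl allI impI)
  fix e :: real assume e: "e > 0"
  define d where "d = min \<delta> (e / (\<bar>K\<bar>+1))"
  have dpos: "d > 0" using d e by (simp add: d_def)
  show "\<exists>d>0. \<forall>z. norm (z - y) < d \<longrightarrow> norm (G z - G y - L (z - y)) \<le> e * norm (z - y)"
  proof (intro exI[of _ d] conjI dpos allI impI)
    fix z assume z: "norm (z - y) < d"
    define h where "h = z - y"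
    have h1: "norm h \<le> \<delta>" using z by (simp add: h_def d_def)
    have h2: "norm h * (\<bar>K\<bar>+1) \<le> e" using z e by (simp add: h_def d_def field_simps)
    have "norm (G (y+h) - G y - L h) \<le> K * (norm h)^2" by (rule q[OF h1])
    also have "\<dots> \<le> (\<bar>K\<bar>+1) * norm h * norm h"
      using mult_right_mono[of K "\<bar>K\<bar>+1" "norm h * norm h"] by (simp add: power2_eq_square mult.assoc)
    also have "\<dots> = (norm h * (\<bar>K\<bar>+1)) * norm h" by (simp add: algebra_simps)
    also have "\<dots> \<le> e * norm h" using h2 by (rule mult_right_mono) simp
    finally show "norm (G z - G y - L (z - y)) \<le> e * norm (z - y)" by (simp add: h_def)
  qed
qed

locale ufl =
  fixes U :: "nat set set"
  assumes U: "nonprincipal_ultrafilter U"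
begin

lemma U_mono: "A \<in> U \<Longrightarrow> A \<subseteq> B \<Longrightarrow> B \<in> U" using U unfolding nonprincipal_ultrafilter_def by blast
lemma U_int: "A \<in> U \<Longrightarrow> B \<in> U \<Longrightarrow> A \<inter> B \<in> U" using U unfolding nonprincipal_ultrafilter_def by blast
lemma U_empty: "{} \<notin> U" using U unfolding nonprincipal_ultrafilter_def by blast
lemma U_compl: "A \<notin> U \<Longrightarrow> -A \<in> U" using U unfolding nonprincipal_ultrafilter_def by blast
lemma U_fin: "finite A \<Longrightarrow> A \<notin> U" using U unfolding nonprincipal_ultrafilter_def by blast
lemma U_UNIV: "UNIV \<in> U" using U_compl[of "{}"] U_empty by auto

definition UF :: "nat filter" where "UF = Abs_filter (\<lambda>P. {i. P i} \<in> U)"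

lemma eventually_UF: "eventually P UF \<longleftrightarrow> {i. P i} \<in> U"
  unfolding UF_def
proof (rule eventually_Abs_filter)
  show "is_filter (\<lambda>P. {i. P i} \<in> U)"
    unfolding is_filter_def
  proof (intro conjI allI impI)
    show "{i. True} \<in> U" using U_UNIV by simp
  next
    fix P Q assume "{i. P i} \<in> U" "{i. Q i} \<in> U"
    from U_int[OF this] show "{i. P i \<and> Q i} \<in> U" by (simp add: Collect_conj_eq)
  next
    fix P Q assume a: "\<forall>x. P x \<longrightarrow> Q x" and b: "{i. P i} \<in> U"
    have "{i. P i} \<subseteq> {i. Q i}" using a by auto
    then show "{i. Q i} \<in> U" by (rule U_mono[OF b])
  qed
qed

lemma UF_ne: "UF \<noteq> bot"
  using U_empty by (simp add: trivial_limit_def eventually_UF)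

lemma UF_ultra: "\<not> eventually P UF \<Longrightarrow> eventually (\<lambda>i. \<not> P i) UF"
  using U_compl[of "{i. P i}"] by (simp add: eventually_UF Collect_neg_eq)

lemma UF_seq: "UF \<le> sequentially"
  unfolding le_filter_def
proof (intro allI impI)
  fix P assume "eventually P sequentially"
  then obtain N where N: "\<And>n. n \<ge> N \<Longrightarrow> P n" by (auto simp: eventually_sequentially)
  have "{..<N} \<notin> U" by (rule U_fin) simp
  then have "- {..<N} \<in> U" by (rule U_compl)
  then show "eventually P UF" unfolding eventually_UF by (rule U_mono) (auto intro: N)
qed

lemma happrox_iff: "happrox U x y \<longleftrightarrow> ((\<lambda>i. x i - y i) \<longlongrightarrow> 0) UF"
  unfolding happrox_def hinfinitesimal_def tendsto_iff by (simp add: eventually_UF)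

lemma approx_star_iff: "happrox U s (hstar c) \<longleftrightarrow> (s \<longlongrightarrow> c) UF"
  unfolding happrox_def hinfinitesimal_def tendsto_iff by (simp add: eventually_UF hstar_def dist_norm)

lemma hbounded_iff: "hbounded U s \<longleftrightarrow> (\<exists>r. eventually (\<lambda>i. norm (s i) \<le> r) UF)"
  unfolding hbounded_def by (simp add: eventually_UF)

lemma conv_bounded:
  assumes "(s \<longlongrightarrow> c) UF" shows "hbounded U s"
proof -
  have "eventually (\<lambda>i. dist (s i) c < 1) UF" using assms by (simp add: tendsto_iff)
  then have "eventually (\<lambda>i. norm (s i) \<le> norm c + 1) UF"
  proof eventually_elim
    case (elim i)
    have "norm (s i) \<le> norm c + norm (s i - c)" by (rule norm_triangle_sub)
    then show ?case using elim by (simp add: dist_norm)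
  qed
  then show ?thesis unfolding hbounded_iff by blast
qed

lemma bounded_conv:
  fixes s :: "nat \<Rightarrow> 'a::{heine_borel,real_normed_vector}"
  assumes "hbounded U s" shows "\<exists>c. (s \<longlongrightarrow> c) UF"
proof -
  obtain r where r: "eventually (\<lambda>i. norm (s i) \<le> r) UF" using assms hbounded_iff by blast
  have ne: "filtermap s UF \<noteq> bot" using UF_ne by (simp add: filtermap_bot_iff)
  have ev: "eventually (\<lambda>x. x \<in> cball 0 r) (filtermap s UF)"
    using r by (simp add: eventually_filtermap)
  obtain c where c: "inf (nhds c) (filtermap s UF) \<noteq> bot"
    using compact_cball[of "0::'a" r] ne ev unfolding compact_filter by blast
  have "(s \<longlongrightarrow> c) UF"
    unfolding tendsto_def
  proof (intro allI impI)
    fix S assume S: "open S" "c \<in> S"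
    show "eventually (\<lambda>i. s i \<in> S) UF"
    proof (rule ccontr)
      assume "\<not> eventually (\<lambda>i. s i \<in> S) UF"
      then have "eventually (\<lambda>i. s i \<notin> S) UF" by (rule UF_ultra)
      then have e2: "eventually (\<lambda>x. x \<notin> S) (filtermap s UF)" by (simp add: eventually_filtermap)
      have e1: "eventually (\<lambda>x. x \<in> S) (nhds c)" using S eventually_nhds by blast
      have "eventually (\<lambda>x. False) (inf (nhds c) (filtermap s UF))"
        unfolding eventually_inf using e1 e2 by blast
      then show False using c by (simp add: trivial_limit_def)
    qed
  qed
  then show ?thesis by blast
qed

lemma hst_eq: "(s \<longlongrightarrow> c) UF \<Longrightarrow> hst U s = c"
  unfolding hst_def
proof (rule the_equality)
  assume "(s \<longlongrightarrow> c) UF" then show "happrox U s (hstar c)" by (simp add: approx_star_iff)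
next
  fix c' assume "(s \<longlongrightarrow> c) UF" "happrox U s (hstar c')"
  then show "c' = c" using tendsto_unique[OF UF_ne] by (simp add: approx_star_iff)
qed

lemma hst_tends:
  fixes s :: "nat \<Rightarrow> 'a::{heine_borel,real_normed_vector}"
  shows "hbounded U s \<Longrightarrow> (s \<longlongrightarrow> hst U s) UF"
proof -
  assume "hbounded U s"
  then obtain c where "(s \<longlongrightarrow> c) UF" using bounded_conv by blast
  moreover then have "hst U s = c" by (rule hst_eq)
  ultimately show ?thesis by simp
qed

end

context ufl begin
lemma lim_holo:
  fixes F :: "nat \<Rightarrow> complex^'n \<Rightarrow> complex" and G :: "complex^'n \<Rightarrow> complex"
  assumes r: "r > 0"
    and ev: "eventually (\<lambda>i. holo_on (ball y r) (F i) \<and> (\<forall>w\<in>ball y r. norm (F i w) \<le> M)) UF"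
    and lim: "\<And>w. w \<in> ball y r \<Longrightarrow> ((\<lambda>i. F i w) \<longlongrightarrow> G w) UF"
  shows "(G has_derivative (\<lambda>h. Lim UF (\<lambda>i. Dv (F i) y h))) (at y)"
    and "\<And>c v. Lim UF (\<lambda>i. Dv (F i) y (c *s v)) = c * Lim UF (\<lambda>i. Dv (F i) y v)"
    and "\<And>h. ((\<lambda>i. Dv (F i) y h) \<longlongrightarrow> Lim UF (\<lambda>i. Dv (F i) y h)) UF"
proof -
  define L where "L h = Lim UF (\<lambda>i. Dv (F i) y h)" for h
  have yin: "y \<in> ball y r" using r by simp
  have conv: "((\<lambda>i. Dv (F i) y h) \<longlongrightarrow> L h) UF" for h
  proof -
    have "eventually (\<lambda>i. norm (Dv (F i) y h) \<le> 4*M*norm h/r) UF"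
      using ev by eventually_elim (intro sv_bounds(1)[OF _ _ r], auto)
    then have "hbounded U (\<lambda>i. Dv (F i) y h)" unfolding hbounded_iff by blast
    then obtain c where c: "((\<lambda>i. Dv (F i) y h) \<longlongrightarrow> c) UF" using bounded_conv by blast
    then have "L h = c" unfolding L_def by (rule tendsto_Lim[OF UF_ne])
    then show ?thesis using c by simp
  qed
  then show "\<And>h. ((\<lambda>i. Dv (F i) y h) \<longlongrightarrow> Lim UF (\<lambda>i. Dv (F i) y h)) UF" by (simp add: L_def)
  have evD: "eventually (\<lambda>i. (F i has_derivative Dv (F i) y) (at y) \<and> (\<forall>c v. Dv (F i) y (c *s v) = c * Dv (F i) y v)) UF"
    using ev by eventually_elim (intro conjI allI holo_Dv[OF _ yin], auto)
  have Lsc: "L (c *s v) = c * L v" for c v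
  proof -
    have e: "eventually (\<lambda>i. c * Dv (F i) y v = Dv (F i) y (c *s v)) UF" using evD by eventually_elim simp
    have "((\<lambda>i. Dv (F i) y (c *s v)) \<longlongrightarrow> c * L v) UF"
      by (rule Lim_transform_eventually[OF tendsto_mult_left[OF conv[of v]] e])
    then show ?thesis using conv[of "c *s v"] by (intro tendsto_unique[OF UF_ne])
  qed
  then show "\<And>c v. Lim UF (\<lambda>i. Dv (F i) y (c *s v)) = c * Lim UF (\<lambda>i. Dv (F i) y v)" by (simp add: L_def)
  have Ladd: "L (u + v) = L u + L v" for u v
  proof -
    have e: "eventually (\<lambda>i. Dv (F i) y u + Dv (F i) y v = Dv (F i) y (u + v)) UF"
      using evD by eventually_elim (metis has_derivative_linear linear_add)
    have "((\<lambda>i. Dv (F i) y (u + v)) \<longlongrightarrow> L u + L v) UF"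
      by (rule Lim_transform_eventually[OF tendsto_add[OF conv[of u] conv[of v]] e])
    then show ?thesis using conv[of "u + v"] by (intro tendsto_unique[OF UF_ne])
  qed
  have lin: "linear L"
    by (rule linearI) (simp_all add: Ladd scaleR_smult_vec Lsc scaleR_conv_of_real[where 'a=complex])
  then have bl: "bounded_linear L" by (simp add: linear_conv_bounded_linear)
  have q: "norm (G (y+h) - G y - L h) \<le> 32*M/r^2 * (norm h)^2" if h: "norm h \<le> r/2" for h
  proof -
    have yh: "y + h \<in> ball y r" using h r by (simp add: dist_norm)
    have t: "((\<lambda>i. norm (F i (y+h) - F i y - Dv (F i) y h)) \<longlongrightarrow> norm (G (y+h) - G y - L h)) UF"
      by (intro tendsto_norm tendsto_diff lim yh yin conv)
    have "eventually (\<lambda>i. norm (F i (y+h) - F i y - Dv (F i) y h) \<le> 32*M/r^2 * (norm h)^2) UF"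
      using ev
    proof eventually_elim
      case (elim i)
      then have "norm (F i (y+h) - F i y - Dv (F i) y h) \<le> 32*M*(norm h)^2/r^2"
        by (intro sv_bounds(3)[OF _ _ r h]) (use elim in auto)
      then show ?case by simp
    qed
    then show ?thesis by (rule tendsto_upperbound[OF t _ UF_ne])
  qed
  have "(G has_derivative L) (at y)" using r by (intro quad_deriv[OF bl _ q, of "r/2"]) auto
  then show "(G has_derivative (\<lambda>h. Lim UF (\<lambda>i. Dv (F i) y h))) (at y)" by (simp add: L_def[abs_def])
qed

end

lemma norm_ev: "norm (ev j :: complex^'n) = 1"
proof -
  have "ev j = axis j (1::complex)" by (simp add: ev_def axis_def)
  moreover have "axis j (1::complex) \<in> (Basis :: (complex^'n) set)"
    unfolding Basis_vec_def by (auto simp: Basis_complex_def)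
  ultimately show ?thesis by (simp add: norm_Basis)
qed

lemma holo_on_subset: "holo_on S F \<Longrightarrow> T \<subseteq> S \<Longrightarrow> holo_on T F"
  unfolding holo_on_def by blast

lemma holo_on_cont:
  fixes F :: "complex^'n \<Rightarrow> complex"
  assumes "holo_on S F" shows "continuous_on S F"
proof (rule continuous_at_imp_continuous_on, rule ballI)
  fix y assume "y \<in> S"
  then obtain L where "(F has_derivative L) (at y)" using assms unfolding holo_on_def by blast
  then show "isCont F y" by (rule has_derivative_continuous)
qed

lemma holo_on_quot:
  fixes F :: "complex^'n \<Rightarrow> complex"
  assumes "holo_on S F" "\<And>w. w \<in> T \<Longrightarrow> w + c \<in> S" "\<And>w. w \<in> T \<Longrightarrow> w \<in> S"
  shows "holo_on T (\<lambda>w. (F (w + c) - F w) / e)"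
  unfolding holo_on_def
proof
  fix w assume w: "w \<in> T"
  obtain L1 where L1: "(F has_derivative L1) (at (w + c))" "\<forall>a v. L1 (a *s v) = a * L1 v"
    using assms(1) assms(2)[OF w] unfolding holo_on_def by blast
  obtain L2 where L2: "(F has_derivative L2) (at w)" "\<forall>a v. L2 (a *s v) = a * L2 v"
    using assms(1) assms(3)[OF w] unfolding holo_on_def by blast
  have d1: "((\<lambda>w. F (w + c)) has_derivative L1) (at w)"
  proof -
    have "((\<lambda>w. w + c) has_derivative (\<lambda>v. v)) (at w)" by (intro derivative_eq_intros) auto
    from has_derivative_compose[OF this L1(1)] show ?thesis by (simp add: o_def)
  qed
  have "((\<lambda>w. F (w + c) - F w) has_derivative (\<lambda>v. L1 v - L2 v)) (at w)" by (rule has_derivative_diff[OF d1 L2(1)])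
  then have "((\<lambda>w. inverse e * (F (w + c) - F w)) has_derivative (\<lambda>v. inverse e * (L1 v - L2 v))) (at w)"
    by (rule has_derivative_mult_right)
  moreover have "(\<lambda>w. inverse e * (F (w + c) - F w)) = (\<lambda>w. (F (w + c) - F w) / e)"
    "(\<lambda>v. inverse e * (L1 v - L2 v)) = (\<lambda>v. (L1 v - L2 v) / e)"
    by (auto simp: divide_inverse mult.commute)
  ultimately have "((\<lambda>w. (F (w + c) - F w) / e) has_derivative (\<lambda>v. (L1 v - L2 v) / e)) (at w)" by simp
  moreover have "\<forall>a v. (L1 (a *s v) - L2 (a *s v)) / e = a * ((L1 v - L2 v) / e)"
    using L1(2) L2(2) by (simp add: algebra_simps)
  ultimately show "\<exists>L. ((\<lambda>w. (F (w + c) - F w) / e) has_derivative L) (at w) \<and> (\<forall>a v. L (a *s v) = a * L v)"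
    by blast
qed

context ufl begin

lemma holo_cpartial:
  fixes F :: "complex^'n \<Rightarrow> complex"
  assumes hol: "holo_on S F" and S: "open S"
  shows "holo_on S (cpartial j F)"
  unfolding holo_on_def
proof
  fix y assume y: "y \<in> S"
  obtain r0 where r0: "r0 > 0" "cball y r0 \<subseteq> S" using S y open_contains_cball by blast
  define r where "r = r0/3"
  have r: "r > 0" using r0 by (simp add: r_def)
  have sub3: "cball y (3*r) \<subseteq> S" using r0 by (simp add: r_def)
  have "compact (F ` cball y (3*r))"
    by (intro compact_continuous_image continuous_on_subset[OF holo_on_cont[OF hol] sub3]) simp
  then obtain B where B: "\<forall>x\<in>F ` cball y (3*r). norm x \<le> B"
    using compact_imp_bounded bounded_iff by blast
  define M where "M = B"
  have M: "norm (F w) \<le> M" if "w \<in> cball y (3*r)" for w using B that by (simp add: M_def)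
  define eps where "eps n = r / (real n + 1)" for n
  have eps: "eps n > 0" "eps n \<le> r" for n using r by (auto simp: eps_def field_simps)
  define Fn where "Fn n w = (F (w + complex_of_real (eps n) *s ev j) - F w) / complex_of_real (eps n)" for n w
  have nrm: "norm (complex_of_real (eps n) *s (ev j :: complex^'n)) = eps n" for n
    using eps(1)[of n] by (simp add: norm_smult_vec norm_ev)
  have hn: "holo_on (ball y r) (Fn n)" for n
    unfolding Fn_def
  proof (rule holo_on_quot[OF hol])
    fix w assume w: "w \<in> ball y r"
    have "dist y (w + complex_of_real (eps n) *s ev j) = norm ((y - w) - complex_of_real (eps n) *s ev j)"
      by (simp add: dist_norm algebra_simps)
    also have "\<dots> \<le> norm (y - w) + norm (complex_of_real (eps n) *s ev j)" by (rule norm_triangle_ineq4)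
    finally have "dist y (w + complex_of_real (eps n) *s ev j) \<le> dist y w + eps n"
      using nrm[of n] by (simp add: dist_norm)
    then have "w + complex_of_real (eps n) *s ev j \<in> cball y (3*r)" using w eps(2)[of n] r by simp
    then show "w + complex_of_real (eps n) *s ev j \<in> S" using sub3 by blast
    show "w \<in> S" using w sub3 r by auto
  qed
  have bn: "norm (Fn n w) \<le> 2*M/r" if w: "w \<in> ball y r" for n w
  proof -
    have sub: "ball w (2*r) \<subseteq> cball y (3*r)"
    proof
      fix x assume "x \<in> ball w (2*r)"
      have "dist y x \<le> dist y w + dist w x" by (rule dist_triangle)
      then show "x \<in> cball y (3*r)" using w \<open>x \<in> ball w (2*r)\<close> by simp
    qed
    have h: "norm (complex_of_real (eps n) *s (ev j :: complex^'n)) \<le> 2*r/2" using nrm eps by simp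
    have "norm (F (w + complex_of_real (eps n) *s ev j) - F w) \<le> 4*M*eps n/(2*r)"
    proof (rule sv_bounds(2)[where y=w and r="2*r" and F=F and M=M, OF _ _ _ h, unfolded nrm])
      show "holo_on (ball w (2*r)) F" using holo_on_subset[OF hol] sub sub3 by blast
      show "\<And>x. x \<in> ball w (2*r) \<Longrightarrow> norm (F x) \<le> M" using M sub by blast
      show "0 < 2*r" using r by simp
    qed
    then show ?thesis using eps(1)[of n] r
      by (simp add: Fn_def norm_divide field_simps)
  qed
  have lim: "((\<lambda>n. Fn n w) \<longlongrightarrow> cpartial j F w) UF" if w: "w \<in> ball y r" for w
  proof -
    have "w \<in> cball y (3*r)" using w r by simp
    then have wS: "w \<in> S" using sub3 by blast
    obtain L where L: "(F has_derivative L) (at w)" "\<forall>a v. L (a *s v) = a * L v"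
      using hol wS unfolding holo_on_def by blast
    have d: "((\<lambda>t. F (w + t *s ev j)) has_field_derivative L (ev j)) (at 0)"
      using L by (intro line_deriv) auto
    have cp: "cpartial j F w = L (ev j)" unfolding cpartial_Dv Dv_def by (rule DERIV_imp_deriv[OF d])
    have t1: "((\<lambda>t. (F (w + t *s ev j) - F (w + 0 *s ev j)) / (t - 0)) \<longlongrightarrow> L (ev j)) (at 0)"
      using d unfolding has_field_derivative_iff by simp
    have e0: "filterlim (\<lambda>n. complex_of_real (eps n)) (at 0) sequentially"
      unfolding filterlim_at
    proof
      show "eventually (\<lambda>n. complex_of_real (eps n) \<in> UNIV \<and> complex_of_real (eps n) \<noteq> 0) sequentially"
        using eps(1) by (simp add: order_less_imp_not_eq2)
      have "(\<lambda>n. r * inverse (real (Suc n))) \<longlonglongrightarrow> r * 0"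
        by (intro tendsto_mult_left LIMSEQ_inverse_real_of_nat)
      moreover have "(\<lambda>n. r * inverse (real (Suc n))) = eps" by (auto simp: eps_def divide_inverse)
      ultimately have "eps \<longlonglongrightarrow> 0" by simp
      then show "(\<lambda>n. complex_of_real (eps n)) \<longlonglongrightarrow> 0" using tendsto_of_real by fastforce
    qed
    have "((\<lambda>n. (F (w + complex_of_real (eps n) *s ev j) - F (w + 0 *s ev j)) / (complex_of_real (eps n) - 0)) \<longlongrightarrow> L (ev j)) sequentially"
      by (rule filterlim_compose[OF t1 e0])
    then have "((\<lambda>n. Fn n w) \<longlongrightarrow> L (ev j)) sequentially" by (simp add: Fn_def)
    then show ?thesis unfolding cp by (rule tendsto_mono[OF UF_seq])
  qed
  have ev: "eventually (\<lambda>n. holo_on (ball y r) (Fn n) \<and> (\<forall>w\<in>ball y r. norm (Fn n w) \<le> 2*M/r)) UF"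
    using hn bn by simp
  note LH = lim_holo[OF r ev lim]
  show "\<exists>L. (cpartial j F has_derivative L) (at y) \<and> (\<forall>c v. L (c *s v) = c * L v)"
    using LH(1,2) by blast
qed

end

lemma cpartial_local:
  fixes K K' :: "complex^'n \<Rightarrow> complex"
  assumes S: "open S" and x: "x \<in> S" and eq: "\<And>w. w \<in> S \<Longrightarrow> K w = K' w"
  shows "cpartial j K x = cpartial j K' x"
proof -
  obtain e where e: "e > 0" "ball x e \<subseteq> S" using S x open_contains_ball by blast
  have "eventually (\<lambda>w. K (x + w *s ev j) = K' (x + w *s ev j)) (nhds (0::complex))"
    unfolding eventually_nhds_metric
  proof (intro exI[of _ e] conjI e allI impI)
    fix w :: complex assume "dist w 0 < e"
    then have "x + w *s ev j \<in> ball x e" by (simp add: dist_norm norm_smult_vec norm_ev)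
    then show "K (x + w *s ev j) = K' (x + w *s ev j)" using e eq by blast
  qed
  then show ?thesis unfolding cpartial_Dv Dv_def by (rule deriv_cong_ev) simp
qed

locale ufa = ufl +
  fixes a :: "nat \<Rightarrow> complex^'n" and R :: real
  assumes a_bdd: "hbounded U a" and Rpos: "R > 0"
begin

definition c where "c = hst U a"
lemma a_lim: "(a \<longlongrightarrow> c) UF" unfolding c_def by (rule hst_tends[OF a_bdd])

definition Good :: "(nat \<Rightarrow> complex^'n \<Rightarrow> complex) \<Rightarrow> bool" where
  "Good F \<longleftrightarrow> (\<forall>r. 0 < r \<and> r < R \<longrightarrow> (\<exists>M. eventually (\<lambda>i. holo_on (ball (a i) R) (F i)
       \<and> (\<forall>w\<in>cball (a i) r. norm (F i w) \<le> M)) UF))"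

definition Gcon :: "(nat \<Rightarrow> complex^'n \<Rightarrow> complex) \<Rightarrow> complex^'n \<Rightarrow> complex" where
  "Gcon F x = hst U (\<lambda>i. F i x)"

lemma good_cpartial:
  assumes G: "Good F" shows "Good (\<lambda>i. cpartial j (F i))"
  unfolding Good_def
proof (intro allI impI)
  fix r assume r: "0 < r \<and> r < R"
  define r' where "r' = (r + R)/2"
  have r': "0 < r'" "r' < R" "r < r'" using r by (auto simp: r'_def)
  obtain M where M: "eventually (\<lambda>i. holo_on (ball (a i) R) (F i) \<and> (\<forall>w\<in>cball (a i) r'. norm (F i w) \<le> M)) UF"
    using G r' unfolding Good_def by blast
  define \<delta> where "\<delta> = r' - r"
  have \<delta>: "\<delta> > 0" using r' by (simp add: \<delta>_def)
  show "\<exists>M. eventually (\<lambda>i. holo_on (ball (a i) R) (cpartial j (F i)) \<and> (\<forall>w\<in>cball (a i) r. norm (cpartial j (F i) w) \<le> M)) UF"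
  proof (intro exI[of _ "4*M/\<delta>"])
    show "eventually (\<lambda>i. holo_on (ball (a i) R) (cpartial j (F i)) \<and> (\<forall>w\<in>cball (a i) r. norm (cpartial j (F i) w) \<le> 4*M/\<delta>)) UF"
      using M
    proof eventually_elim
      case (elim i)
      have h1: "holo_on (ball (a i) R) (cpartial j (F i))" using elim by (intro holo_cpartial) auto
      have h2: "norm (cpartial j (F i) w) \<le> 4*M/\<delta>" if w: "w \<in> cball (a i) r" for w
      proof -
        have sub: "ball w \<delta> \<subseteq> cball (a i) r'"
        proof
          fix x assume x: "x \<in> ball w \<delta>"
          have "dist (a i) x \<le> dist (a i) w + dist w x" by (rule dist_triangle)
          then show "x \<in> cball (a i) r'" using w x by (simp add: \<delta>_def)
        qed
        have sub2: "cball (a i) r' \<subseteq> ball (a i) R" using r' by auto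
        have "norm (Dv (F i) w (ev j)) \<le> 4*M*norm (ev j :: complex^'n)/\<delta>"
        proof (rule sv_bounds(1)[OF _ _ \<delta>])
          show "holo_on (ball w \<delta>) (F i)" using elim sub sub2 holo_on_subset by blast
          show "\<And>x. x \<in> ball w \<delta> \<Longrightarrow> norm (F i x) \<le> M" using elim sub by blast
        qed
        then show ?thesis by (simp add: cpartial_Dv norm_ev)
      qed
      show ?case using h1 h2 by blast
    qed
  qed
qed

lemma good_approx:
  assumes G: "Good F" and x: "x \<in> ball c R" and z: "(z \<longlongrightarrow> x) UF"
  shows "((\<lambda>i. F i (z i)) \<longlongrightarrow> Gcon F x) UF"
proof -
  define d where "d = dist c x"
  have d: "d < R" "d \<ge> 0" using x by (auto simp: d_def)
  define \<rho> where "\<rho> = (R - d)/4"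
  have \<rho>: "\<rho> > 0" using d by (simp add: \<rho>_def)
  define r where "r = d + 2*\<rho>"
  have r: "0 < r" "r < R" using d unfolding r_def \<rho>_def by (simp_all add: field_simps)
  obtain M where M: "eventually (\<lambda>i. holo_on (ball (a i) R) (F i) \<and> (\<forall>w\<in>cball (a i) r. norm (F i w) \<le> M)) UF"
    using G r unfolding Good_def by blast
  have ea: "eventually (\<lambda>i. dist (a i) c < \<rho>) UF" using a_lim \<rho> by (simp add: tendsto_iff)
  have ez: "eventually (\<lambda>i. dist (z i) x < \<rho>/2) UF" using z \<rho> unfolding tendsto_iff by (meson half_gt_zero)
  have key: "eventually (\<lambda>i. norm (F i x) \<le> M \<and> norm (F i (z i) - F i x) \<le> 4*M*dist (z i) x/\<rho>) UF"
    using M ea ez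
  proof eventually_elim
    case (elim i)
    have sub: "ball x \<rho> \<subseteq> cball (a i) r"
    proof
      fix w assume w: "w \<in> ball x \<rho>"
      have t1: "dist (a i) w \<le> dist (a i) x + dist x w" by (rule dist_triangle)
      have t2: "dist (a i) x \<le> dist (a i) c + dist c x" by (rule dist_triangle)
      have "dist (a i) w \<le> dist (a i) c + dist c x + dist x w" using t1 t2 by linarith
      then show "w \<in> cball (a i) r" using w elim by (simp add: r_def d_def)
    qed
    have sub2: "cball (a i) r \<subseteq> ball (a i) R" using r by auto
    have "x \<in> ball x \<rho>" using \<rho> by simp
    then have xin: "x \<in> cball (a i) r" using sub by blast
    have h: "norm (z i - x) \<le> \<rho>/2" using elim by (simp add: dist_norm)
    have "norm (F i (x + (z i - x)) - F i x) \<le> 4*M*norm (z i - x)/\<rho>"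
    proof (rule sv_bounds(2)[OF _ _ \<rho> h])
      show "holo_on (ball x \<rho>) (F i)" using elim sub sub2 holo_on_subset by blast
      show "\<And>w. w \<in> ball x \<rho> \<Longrightarrow> norm (F i w) \<le> M" using elim sub by blast
    qed
    then show ?case using elim xin by (simp add: dist_norm)
  qed
  have "eventually (\<lambda>i. norm (F i x) \<le> M) UF" using key by (rule eventually_mono) simp
  then have bx: "hbounded U (\<lambda>i. F i x)" unfolding hbounded_iff by blast
  have lx: "((\<lambda>i. F i x) \<longlongrightarrow> Gcon F x) UF" unfolding Gcon_def by (rule hst_tends[OF bx])
  have "((\<lambda>i. dist (z i) x) \<longlongrightarrow> dist x x) UF" by (rule tendsto_dist[OF z tendsto_const])
  then have "((\<lambda>i. dist (z i) x) \<longlongrightarrow> 0) UF" by simp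
  from tendsto_mult_left[OF this, of "4*M/\<rho>"]
  have dz: "((\<lambda>i. 4*M/\<rho> * dist (z i) x) \<longlongrightarrow> 0) UF" by simp
  have "((\<lambda>i. F i (z i) - F i x) \<longlongrightarrow> 0) UF"
  proof (rule Lim_null_comparison)
    show "eventually (\<lambda>i. norm (F i (z i) - F i x) \<le> 4*M/\<rho> * dist (z i) x) UF"
      using key by (rule eventually_mono) simp
    show "((\<lambda>i. 4*M/\<rho> * dist (z i) x) \<longlongrightarrow> 0) UF" by (rule dz)
  qed
  from tendsto_add[OF this lx] show ?thesis by simp
qed

lemma good_holo:
  assumes G: "Good F" and x: "x \<in> ball c R"
  shows "\<exists>L. (Gcon F has_derivative L) (at x) \<and> (\<forall>c v. L (c *s v) = c * L v)"
    and "cpartial j (Gcon F) x = Gcon (\<lambda>i. cpartial j (F i)) x"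
proof -
  define d where "d = dist c x"
  have d: "d < R" "d \<ge> 0" using x by (auto simp: d_def)
  define \<rho> where "\<rho> = (R - d)/4"
  have \<rho>: "\<rho> > 0" using d by (simp add: \<rho>_def)
  define r where "r = d + 2*\<rho>"
  have r: "0 < r" "r < R" using d unfolding r_def \<rho>_def by (simp_all add: field_simps)
  obtain M where M: "eventually (\<lambda>i. holo_on (ball (a i) R) (F i) \<and> (\<forall>w\<in>cball (a i) r. norm (F i w) \<le> M)) UF"
    using G r unfolding Good_def by blast
  have ea: "eventually (\<lambda>i. dist (a i) c < \<rho>) UF" using a_lim \<rho> by (simp add: tendsto_iff)
  have ev: "eventually (\<lambda>i. holo_on (ball x \<rho>) (F i) \<and> (\<forall>w\<in>ball x \<rho>. norm (F i w) \<le> M)) UF"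
    using M ea
  proof eventually_elim
    case (elim i)
    have sub: "ball x \<rho> \<subseteq> cball (a i) r"
    proof
      fix w assume w: "w \<in> ball x \<rho>"
      have t1: "dist (a i) w \<le> dist (a i) x + dist x w" by (rule dist_triangle)
      have t2: "dist (a i) x \<le> dist (a i) c + dist c x" by (rule dist_triangle)
      have "dist (a i) w \<le> dist (a i) c + dist c x + dist x w" using t1 t2 by linarith
      then show "w \<in> cball (a i) r" using w elim by (simp add: r_def d_def)
    qed
    have sub2: "cball (a i) r \<subseteq> ball (a i) R" using r by auto
    show ?case using elim sub sub2 holo_on_subset by blast
  qed
  have lim: "((\<lambda>i. F i w) \<longlongrightarrow> Gcon F w) UF" if w: "w \<in> ball x \<rho>" for w
  proof -
    have "dist c w \<le> dist c x + dist x w" by (rule dist_triangle)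
    then have "w \<in> ball c R" using w \<rho> d by (simp add: d_def \<rho>_def)
    from good_approx[OF G this tendsto_const] show ?thesis by simp
  qed
  note LH = lim_holo[OF \<rho> ev lim]
  show "\<exists>L. (Gcon F has_derivative L) (at x) \<and> (\<forall>c v. L (c *s v) = c * L v)" using LH(1,2) by blast
  have "((\<lambda>t. Gcon F (x + t *s ev j)) has_field_derivative Lim UF (\<lambda>i. Dv (F i) x (ev j))) (at 0)"
    using LH(1,2) by (intro line_deriv[where L="\<lambda>h. Lim UF (\<lambda>i. Dv (F i) x h)"]) auto
  then have "cpartial j (Gcon F) x = Lim UF (\<lambda>i. Dv (F i) x (ev j))"
    unfolding cpartial_Dv Dv_def by (rule DERIV_imp_deriv)
  also have "\<dots> = Gcon (\<lambda>i. cpartial j (F i)) x"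
    unfolding Gcon_def cpartial_Dv by (rule hst_eq[symmetric], rule LH(3))
  finally show "cpartial j (Gcon F) x = Gcon (\<lambda>i. cpartial j (F i)) x" .
qed

end

context ufa begin

lemma good_iter:
  assumes G: "Good H" and K: "\<forall>x\<in>ball c R. K x = Gcon H x"
  shows "Good (\<lambda>i. (cpartial j ^^ n) (H i)) \<and> (\<forall>x\<in>ball c R. (cpartial j ^^ n) K x = Gcon (\<lambda>i. (cpartial j ^^ n) (H i)) x)"
proof (induction n)
  case 0
  then show ?case using G K by simp
next
  case (Suc n)
  then have G1: "Good (\<lambda>i. (cpartial j ^^ n) (H i))"
    and K1: "\<forall>x\<in>ball c R. (cpartial j ^^ n) K x = Gcon (\<lambda>i. (cpartial j ^^ n) (H i)) x" by auto
  have "Good (\<lambda>i. cpartial j ((cpartial j ^^ n) (H i)))" by (rule good_cpartial[OF G1])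
  moreover have "cpartial j ((cpartial j ^^ n) K) x = Gcon (\<lambda>i. cpartial j ((cpartial j ^^ n) (H i))) x"
    if x: "x \<in> ball c R" for x
  proof -
    have "cpartial j ((cpartial j ^^ n) K) x = cpartial j (Gcon (\<lambda>i. (cpartial j ^^ n) (H i))) x"
      by (rule cpartial_local[OF open_ball x]) (use K1 in blast)
    also have "\<dots> = Gcon (\<lambda>i. cpartial j ((cpartial j ^^ n) (H i))) x"
      by (rule good_holo(2)[OF G1 x])
    finally show ?thesis .
  qed
  ultimately show ?case by simp
qed

lemma good_pd:
  assumes G: "Good F"
  shows "Good (\<lambda>i. pd_list \<alpha> js (F i)) \<and> (\<forall>x\<in>ball c R. pd_list \<alpha> js (Gcon F) x = Gcon (\<lambda>i. pd_list \<alpha> js (F i)) x)"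
proof (induction js)
  case Nil
  then show ?case using G by simp
next
  case (Cons j js)
  then have "Good (\<lambda>i. pd_list \<alpha> js (F i))" "\<forall>x\<in>ball c R. pd_list \<alpha> js (Gcon F) x = Gcon (\<lambda>i. pd_list \<alpha> js (F i)) x"
    by auto
  from good_iter[OF this, where j=j and n="\<alpha> j"] show ?case by simp
qed

lemma good_Gcon_holo:
  assumes G: "Good F" shows "holo_on (ball c R) (Gcon F)"
  unfolding holo_on_def using good_holo(1)[OF G] by blast

end

context ufl begin

lemma Sball_iff:
  "q \<in> Sball U p r \<longleftrightarrow> (\<exists>d. d < r \<and> ((\<lambda>i. norm (q i - p i)) \<longlongrightarrow> d) UF)"
proof
  assume "q \<in> Sball U p r"
  then have b: "hbounded U (\<lambda>i. norm (q i - p i))" and h: "hst U (\<lambda>i. norm (q i - p i)) < r"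
    by (auto simp: Sball_def)
  show "\<exists>d. d < r \<and> ((\<lambda>i. norm (q i - p i)) \<longlongrightarrow> d) UF"
    using hst_tends[OF b] h by blast
next
  assume "\<exists>d. d < r \<and> ((\<lambda>i. norm (q i - p i)) \<longlongrightarrow> d) UF"
  then obtain d where d: "d < r" "((\<lambda>i. norm (q i - p i)) \<longlongrightarrow> d) UF" by blast
  show "q \<in> Sball U p r" unfolding Sball_def using conv_bounded[OF d(2)] hst_eq[OF d(2)] d(1) by simp
qed

lemma dom_ball:
  fixes a :: "nat \<Rightarrow> 'a::real_normed_vector"
  assumes B: "Sopen U B" and aB: "a \<in> B" and BD: "B \<subseteq> internal_set U D"
  shows "\<exists>r>0. eventually (\<lambda>i. cball (a i) r \<subseteq> D i) UF"
proof -
  obtain r0 where r0: "r0 > 0" "Sball U a r0 \<subseteq> B" using B aB unfolding Sopen_def by blast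
  define r where "r = r0/2"
  have r: "r > 0" "r < r0" using r0 by (auto simp: r_def)
  show ?thesis
  proof (rule ccontr)
    assume "\<not> ?thesis"
    then have "\<not> eventually (\<lambda>i. cball (a i) r \<subseteq> D i) UF" using r by blast
    then have nev: "eventually (\<lambda>i. \<not> cball (a i) r \<subseteq> D i) UF" by (rule UF_ultra)
    define y where "y i = (if \<exists>w. w \<in> cball (a i) r \<and> w \<notin> D i then SOME w. w \<in> cball (a i) r \<and> w \<notin> D i else a i)" for i
    have ey: "eventually (\<lambda>i. y i \<in> cball (a i) r \<and> y i \<notin> D i) UF"
      using nev
    proof eventually_elim
      case (elim i)
      then have ex: "\<exists>w. w \<in> cball (a i) r \<and> w \<notin> D i" by blast
      show ?case unfolding y_def using someI_ex[OF ex] ex by simp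
    qed
    have eb: "eventually (\<lambda>i. norm (y i - a i) \<le> r) UF"
      using ey by (rule eventually_mono) (simp add: dist_norm norm_minus_commute)
    then have "hbounded U (\<lambda>i. norm (y i - a i))" unfolding hbounded_iff by auto
    then obtain d where d: "((\<lambda>i. norm (y i - a i)) \<longlongrightarrow> d) UF" using bounded_conv by blast
    have "d \<le> r" by (rule tendsto_upperbound[OF d eb UF_ne])
    then have "y \<in> Sball U a r0" unfolding Sball_iff using d r by (intro exI[of _ d]) auto
    then have "y \<in> internal_set U D" using r0 BD by blast
    then have "eventually (\<lambda>i. y i \<in> D i) UF" by (simp add: internal_set_def eventually_UF)
    with ey have "eventually (\<lambda>i. False) UF" by eventually_elim blast
    then show False using UF_ne by (simp add: trivial_limit_def)
  qed
qed

lemma bound_ball: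
  fixes a :: "nat \<Rightarrow> 'a::real_normed_vector" and f :: "nat \<Rightarrow> 'a \<Rightarrow> 'b::real_normed_vector"
  assumes fb: "\<forall>z\<in>halo U a. hbounded U (happ f z)"
  shows "\<exists>m::nat. eventually (\<lambda>i. \<forall>w\<in>cball (a i) (1/(real m+1)). norm (f i w) \<le> real m) UF"
proof (rule ccontr)
  assume neg: "\<not> ?thesis"
  define A where "A m = {i. \<exists>w\<in>cball (a i) (1/(real m+1)). norm (f i w) > real m}" for m
  have AU: "A m \<in> U" for m
  proof -
    have "\<not> eventually (\<lambda>i. \<forall>w\<in>cball (a i) (1/(real m+1)). norm (f i w) \<le> real m) UF"
      using neg by blast
    from UF_ultra[OF this] show ?thesis by (simp add: eventually_UF A_def not_le)
  qed
  define k where "k i = (if i \<in> A 0 then Max {m. m \<le> i \<and> i \<in> A m} else 0)" for i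
  have fin: "finite {m. m \<le> i \<and> i \<in> A m}" for i by (rule finite_subset[of _ "{..i}"]) auto
  have kA: "i \<in> A (k i)" if "i \<in> A 0" for i
  proof -
    have "{m. m \<le> i \<and> i \<in> A m} \<noteq> {}" using that by auto
    from Max_in[OF fin this] show ?thesis using that by (simp add: k_def)
  qed
  have kge: "eventually (\<lambda>i. m \<le> k i \<and> i \<in> A 0) UF" for m
  proof -
    have e1: "eventually (\<lambda>i. i \<in> A m) UF" "eventually (\<lambda>i. i \<in> A 0) UF" using AU by (simp_all add: eventually_UF)
    have e2: "eventually (\<lambda>i. m \<le> i) UF" using UF_seq by (rule filter_leD) (rule eventually_ge_at_top)
    show ?thesis using e1 e2
    proof eventually_elim
      case (elim i)
      then have "m \<le> Max {m. m \<le> i \<and> i \<in> A m}" by (intro Max_ge[OF fin]) auto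
      then show ?case using elim by (simp add: k_def)
    qed
  qed
  define y where "y i = (SOME w. w \<in> cball (a i) (1/(real (k i)+1)) \<and> norm (f i w) > real (k i))" for i
  have yprop: "y i \<in> cball (a i) (1/(real (k i)+1)) \<and> norm (f i (y i)) > real (k i)" if "i \<in> A 0" for i
  proof -
    have "\<exists>w. w \<in> cball (a i) (1/(real (k i)+1)) \<and> norm (f i w) > real (k i)"
      using kA[OF that] by (auto simp: A_def)
    from someI_ex[OF this] show ?thesis by (simp add: y_def)
  qed
  have "y \<in> halo U a"
    unfolding halo_def mem_Collect_eq happrox_iff tendsto_iff
  proof (intro allI impI)
    fix e :: real assume e: "e > 0"
    obtain m where m: "inverse (real (Suc m)) < e" using reals_Archimedean[OF e] by blast
    show "eventually (\<lambda>i. dist (y i - a i) 0 < e) UF"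
      using kge[of m]
    proof eventually_elim
      case (elim i)
      have "norm (y i - a i) \<le> 1/(real (k i)+1)" using yprop[of i] elim by (simp add: dist_norm norm_minus_commute)
      also have "\<dots> \<le> 1/(real m+1)" using elim by (intro divide_left_mono) auto
      also have "\<dots> < e" using m by (simp add: inverse_eq_divide add.commute)
      finally show ?case by simp
    qed
  qed
  then have "hbounded U (happ f y)" using fb by blast
  then obtain Bd where Bd: "eventually (\<lambda>i. norm (f i (y i)) \<le> Bd) UF" unfolding hbounded_iff happ_def by blast
  have "eventually (\<lambda>i. False) UF"
    using Bd kge[of "nat \<lceil>Bd\<rceil>"]
  proof eventually_elim
    case (elim i)
    have "real (nat \<lceil>Bd\<rceil>) \<le> real (k i)" using elim by simp
    moreover have "Bd \<le> real (nat \<lceil>Bd\<rceil>)" by linarith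
    ultimately show False using yprop[of i] elim by linarith
  qed
  then show False using UF_ne by (simp add: trivial_limit_def)
qed

end

lemma zero_exists:
  fixes \<phi> :: "complex \<Rightarrow> complex"
  assumes hol: "\<phi> holomorphic_on ball 0 \<rho>1" and \<rho>: "0 < \<rho>" "\<rho> < \<rho>1" and e: "\<epsilon> > 0"
    and small: "norm (\<phi> 0) < \<epsilon>" and big: "\<And>t. norm t = \<rho> \<Longrightarrow> \<epsilon> \<le> norm (\<phi> t)"
  shows "\<exists>t. norm t \<le> \<rho> \<and> \<phi> t = 0"
proof (rule ccontr)
  assume "\<not> ?thesis"
  then have nz: "\<And>t. t \<in> cball 0 \<rho> \<Longrightarrow> \<phi> t \<noteq> 0" by auto
  have sub: "cball 0 \<rho> \<subseteq> ball 0 \<rho>1" using \<rho> by auto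
  have h1: "(\<lambda>t. inverse (\<phi> t)) holomorphic_on interior (cball 0 \<rho>)"
  proof -
    have "\<phi> holomorphic_on ball 0 \<rho>" using holomorphic_on_subset[OF hol] sub ball_subset_cball by blast
    then show ?thesis using nz by (intro holomorphic_on_inverse) auto
  qed
  have h2: "continuous_on (closure (cball 0 \<rho>)) (\<lambda>t. inverse (\<phi> t))"
    using continuous_on_subset[OF holomorphic_on_imp_continuous_on[OF hol] sub] nz
    by (auto intro!: continuous_on_inverse)
  have "norm (inverse (\<phi> 0)) \<le> inverse \<epsilon>"
  proof (rule maximum_modulus_frontier[OF h1 h2])
    show "bounded (cball (0::complex) \<rho>)" by simp
    show "0 \<in> cball (0::complex) \<rho>" using \<rho> by simp
    fix z :: complex assume "z \<in> frontier (cball 0 \<rho>)"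
    then have "norm z = \<rho>" using \<rho> by simp
    then have "\<epsilon> \<le> norm (\<phi> z)" by (rule big)
    then show "norm (inverse (\<phi> z)) \<le> inverse \<epsilon>" using e by (simp add: norm_inverse le_imp_inverse_le)
  qed
  moreover have "\<phi> 0 \<noteq> 0" using nz \<rho> by simp
  ultimately have i1: "inverse (norm (\<phi> 0)) \<le> inverse \<epsilon>" "0 < norm (\<phi> 0)" by (simp_all add: norm_inverse)
  have "\<epsilon> \<le> norm (\<phi> 0)" by (rule inverse_le_imp_le[OF i1])
  then show False using small by simp
qed

context ufl begin

lemma diag:
  fixes Q :: "nat \<Rightarrow> complex \<Rightarrow> bool"
  assumes \<rho>: "\<rho> > 0" and ex: "\<And>n. eventually (\<lambda>i. \<exists>t. norm t \<le> \<rho>/(real n+1) \<and> Q i t) UF"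
  shows "\<exists>tt. eventually (\<lambda>i. Q i (tt i)) UF \<and> (tt \<longlongrightarrow> 0) UF"
proof -
  define A where "A n = {i. \<exists>t. norm t \<le> \<rho>/(real n+1) \<and> Q i t}" for n
  have AU: "A n \<in> U" for n using ex[of n] by (simp add: eventually_UF A_def)
  define k where "k i = (if i \<in> A 0 then Max {m. m \<le> i \<and> i \<in> A m} else 0)" for i
  have fin: "finite {m. m \<le> i \<and> i \<in> A m}" for i by (rule finite_subset[of _ "{..i}"]) auto
  have kA: "i \<in> A (k i)" if "i \<in> A 0" for i
  proof -
    have "{m. m \<le> i \<and> i \<in> A m} \<noteq> {}" using that by auto
    from Max_in[OF fin this] show ?thesis using that by (simp add: k_def)
  qed
  have kge: "eventually (\<lambda>i. m \<le> k i \<and> i \<in> A 0) UF" for m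
  proof -
    have e1: "eventually (\<lambda>i. i \<in> A m) UF" "eventually (\<lambda>i. i \<in> A 0) UF" using AU by (simp_all add: eventually_UF)
    have e2: "eventually (\<lambda>i. m \<le> i) UF" using UF_seq by (rule filter_leD) (rule eventually_ge_at_top)
    show ?thesis using e1 e2
    proof eventually_elim
      case (elim i)
      then have "m \<le> Max {m. m \<le> i \<and> i \<in> A m}" by (intro Max_ge[OF fin]) auto
      then show ?case using elim by (simp add: k_def)
    qed
  qed
  define tt where "tt i = (SOME t. norm t \<le> \<rho>/(real (k i)+1) \<and> Q i t)" for i
  have tp: "norm (tt i) \<le> \<rho>/(real (k i)+1) \<and> Q i (tt i)" if "i \<in> A 0" for i
  proof -
    have "\<exists>t. norm t \<le> \<rho>/(real (k i)+1) \<and> Q i t" using kA[OF that] by (simp add: A_def)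
    from someI_ex[OF this] show ?thesis by (simp add: tt_def)
  qed
  have "eventually (\<lambda>i. i \<in> A 0) UF" using AU[of 0] by (simp add: eventually_UF)
  then have "eventually (\<lambda>i. Q i (tt i)) UF" by (rule eventually_mono) (use tp in blast)
  moreover have "(tt \<longlongrightarrow> 0) UF"
    unfolding tendsto_iff
  proof (intro allI impI)
    fix e :: real assume e: "e > 0"
    obtain m where m: "inverse (real (Suc m)) < e/\<rho>" using reals_Archimedean[of "e/\<rho>"] e \<rho> by auto
    show "eventually (\<lambda>i. dist (tt i) 0 < e) UF"
      using kge[of m]
    proof eventually_elim
      case (elim i)
      have "norm (tt i) \<le> \<rho>/(real (k i)+1)" using tp[of i] elim by simp
      also have "\<dots> \<le> \<rho>/(real m+1)" using elim \<rho> by (intro divide_left_mono) auto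
      also have "\<dots> < e" using m \<rho> by (simp add: inverse_eq_divide field_simps)
      finally show ?case by simp
    qed
  qed
  ultimately show ?thesis by blast
qed

end

context ufa begin

lemma V_memD:
  assumes z: "z \<in> Sball U a R"
  shows "hbounded U z" "(z \<longlongrightarrow> hst U z) UF" "hst U z \<in> ball c R"
proof -
  obtain d where d: "d < R" "((\<lambda>i. norm (z i - a i)) \<longlongrightarrow> d) UF" using z Sball_iff by blast
  obtain Ba where Ba: "eventually (\<lambda>i. norm (a i) \<le> Ba) UF" using a_bdd hbounded_iff by blast
  obtain Bd where Bd: "eventually (\<lambda>i. norm (z i - a i) \<le> Bd) UF" using conv_bounded[OF d(2)] unfolding hbounded_iff by auto
  have "eventually (\<lambda>i. norm (z i) \<le> Bd + Ba) UF"
    using Ba Bd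
  proof eventually_elim
    case (elim i)
    have "norm (z i) \<le> norm (z i - a i) + norm (a i)" using norm_triangle_sub[of "z i" "a i"] by simp
    then show ?case using elim by simp
  qed
  then show hb: "hbounded U z" unfolding hbounded_iff by blast
  show zl: "(z \<longlongrightarrow> hst U z) UF" by (rule hst_tends[OF hb])
  have "((\<lambda>i. norm (z i - a i)) \<longlongrightarrow> norm (hst U z - c)) UF" by (intro tendsto_norm tendsto_diff zl a_lim)
  then have "norm (hst U z - c) = d" using d(2) tendsto_unique[OF UF_ne] by blast
  then show "hst U z \<in> ball c R" using d(1) by (simp add: dist_norm norm_minus_commute)
qed

lemma a_in_V: "a \<in> Sball U a R"
  unfolding Sball_iff using Rpos by (intro exI[of _ 0]) simp

lemma V_open: "Sopen U (Sball U a R)"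
  unfolding Sopen_def
proof
  fix p assume p: "p \<in> Sball U a R"
  obtain dp where dp: "dp < R" "((\<lambda>i. norm (p i - a i)) \<longlongrightarrow> dp) UF" using p Sball_iff by blast
  show "\<exists>r>0. Sball U p r \<subseteq> Sball U a R"
  proof (intro exI[of _ "R - dp"] conjI subsetI)
    show "R - dp > 0" using dp by simp
    fix q assume q: "q \<in> Sball U p (R - dp)"
    obtain e where e: "e < R - dp" "((\<lambda>i. norm (q i - p i)) \<longlongrightarrow> e) UF" using q Sball_iff by blast
    have le: "eventually (\<lambda>i. norm (q i - a i) \<le> norm (q i - p i) + norm (p i - a i)) UF"
    proof (rule always_eventually, rule allI)
      fix i
      have "q i - a i = (q i - p i) + (p i - a i)" by simp
      then show "norm (q i - a i) \<le> norm (q i - p i) + norm (p i - a i)" by (metis norm_triangle_ineq)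
    qed
    have sl: "((\<lambda>i. norm (q i - p i) + norm (p i - a i)) \<longlongrightarrow> e + dp) UF" by (intro tendsto_add e dp)
    obtain B1 where B1: "eventually (\<lambda>i. norm (norm (q i - p i) + norm (p i - a i)) \<le> B1) UF"
      using conv_bounded[OF sl] unfolding hbounded_iff by blast
    have "eventually (\<lambda>i. norm (norm (q i - a i)) \<le> B1) UF"
      using B1 le by eventually_elim (smt (verit) norm_ge_zero real_norm_def)
    then have "hbounded U (\<lambda>i. norm (q i - a i))" unfolding hbounded_iff by blast
    then obtain dq where dq: "((\<lambda>i. norm (q i - a i)) \<longlongrightarrow> dq) UF" using bounded_conv by blast
    have "dq \<le> e + dp" by (rule tendsto_le[OF UF_ne sl dq le])
    then show "q \<in> Sball U a R" unfolding Sball_iff using dq e by (intro exI[of _ dq]) auto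
  qed
qed

lemma shadow_V: "shadow U (Sball U a R) \<subseteq> ball c R"
proof
  fix x assume "x \<in> shadow U (Sball U a R)"
  then obtain q where q: "q \<in> halo U (hstar x)" "q \<in> Sball U a R" unfolding shadow_def by blast
  have "(q \<longlongrightarrow> x) UF" using q(1) by (simp add: halo_def approx_star_iff)
  moreover note V_memD[OF q(2)]
  ultimately have "x = hst U q" using tendsto_unique[OF UF_ne] by blast
  then show "x \<in> ball c R" using V_memD(3)[OF q(2)] by simp
qed

lemma c_in_shadow: "c \<in> shadow U (Sball U a R)"
  unfolding shadow_def halo_def using a_in_V a_lim by (auto simp: approx_star_iff)

end

lemma smult_one_vec: "(1::complex) *s (v::complex^'n) = v" by (simp add: vec_eq_iff)
lemma smult_zero_vec: "(0::complex) *s (v::complex^'n) = 0" by (simp add: vec_eq_iff)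

context ufa begin

lemma part3:
  fixes f :: "nat \<Rightarrow> complex^'n \<Rightarrow> complex" and w :: "nat \<Rightarrow> complex"
  assumes goodf: "Good f"
    and nc: "\<not> (\<exists>k. \<forall>x\<in>shadow U (Sball U a R). Gcon f x = k)"
    and wl: "(w \<longlongrightarrow> Gcon f c) UF"
  shows "\<exists>z\<in>halo U a. eqU U (happ f z) w"
proof -
  define g where "g = Gcon f"
  have cin: "c \<in> ball c R" using Rpos by simp
  have gapprox: "((\<lambda>i. f i (z i)) \<longlongrightarrow> g x) UF" if "x \<in> ball c R" "(z \<longlongrightarrow> x) UF" for x z
    unfolding g_def by (rule good_approx[OF goodf that])
  have fa: "((\<lambda>i. f i (a i)) \<longlongrightarrow> g c) UF" by (rule gapprox[OF cin a_lim])
  have wl': "(w \<longlongrightarrow> g c) UF" using wl by (simp add: g_def)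
  obtain x1 where x1: "x1 \<in> shadow U (Sball U a R)" "g x1 \<noteq> g c" using nc unfolding g_def by blast
  have x1b: "x1 \<in> ball c R" using x1(1) shadow_V by blast
  define v where "v = x1 - c"
  have v0: "v \<noteq> 0" using x1(2) by (auto simp: v_def)
  define nv where "nv = norm v"
  have nv: "0 < nv" "nv < R" using v0 x1b by (auto simp: nv_def v_def dist_norm norm_minus_commute)
  define \<rho>1 where "\<rho>1 = R / nv"
  have \<rho>1: "1 < \<rho>1" using nv by (simp add: \<rho>1_def)
  define \<psi> where "\<psi> t = g (c + t *s v)" for t
  have ghol: "holo_on (ball c R) g" unfolding g_def by (rule good_Gcon_holo[OF goodf])
  have subl: "ball 0 \<rho>1 \<subseteq> {t. c + t *s v \<in> ball c R}"
  proof
    fix t :: complex assume "t \<in> ball 0 \<rho>1"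
    then have "norm t * nv < R" using nv by (simp add: \<rho>1_def field_simps)
    then show "t \<in> {t. c + t *s v \<in> ball c R}" by (simp add: dist_norm norm_smult_vec nv_def)
  qed
  have \<psi>hol: "\<psi> holomorphic_on ball 0 \<rho>1"
    unfolding \<psi>_def by (rule holomorphic_on_subset[OF holo_on_line[OF ghol] subl])
  have \<psi>01: "\<psi> 1 \<noteq> \<psi> 0" using x1(2) by (simp add: \<psi>_def smult_one_vec smult_zero_vec v_def)
  have h0: "(\<lambda>t. \<psi> t - \<psi> 0) holomorphic_on ball 0 \<rho>1" using \<psi>hol by (intro holomorphic_intros)
  obtain r where r: "0 < r" "ball (0::complex) r \<subseteq> ball 0 \<rho>1" "\<And>t. t \<in> ball 0 r - {0} \<Longrightarrow> \<psi> t - \<psi> 0 \<noteq> 0"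
  proof -
    have i1: "(0::complex) \<in> ball 0 \<rho>1" "(1::complex) \<in> ball 0 \<rho>1" using \<rho>1 by auto
    have i2: "\<psi> 0 - \<psi> 0 = 0" "\<psi> 1 - \<psi> 0 \<noteq> 0" using \<psi>01 by auto
    show ?thesis
    proof (rule isolated_zeros[OF h0 open_ball convex_connected[OF convex_ball] i1(1) i2(1) i1(2) i2(2)])
      fix r assume a1: "0 < r" and a2: "ball (0::complex) r \<subseteq> ball 0 \<rho>1"
        and a3: "\<And>z. z \<in> ball 0 r - {0} \<Longrightarrow> \<psi> z - \<psi> 0 \<noteq> 0"
      show ?thesis by (rule that[OF a1 a2 a3])
    qed
  qed
  define \<rho>0 where "\<rho>0 = min (r/2) (1/2)"
  have \<rho>0: "0 < \<rho>0" "\<rho>0 < r" "\<rho>0 < 1" using r by (auto simp: \<rho>0_def)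
  have fhol: "eventually (\<lambda>i. holo_on (ball (a i) R) (f i)) UF"
  proof -
    have "0 < R/2 \<and> R/2 < R" using Rpos by simp
    from goodf[unfolded Good_def, rule_format, OF this]
    obtain M where "eventually (\<lambda>i. holo_on (ball (a i) R) (f i) \<and> (\<forall>w\<in>cball (a i) (R/2). norm (f i w) \<le> M)) UF"
      by blast
    then show ?thesis by (rule eventually_mono) blast
  qed
  have Z: "eventually (\<lambda>i. \<exists>t. norm t \<le> \<rho>0/(real n+1) \<and> f i (a i + t *s v) = w i) UF" for n
  proof -
    define \<rho> where "\<rho> = \<rho>0/(real n+1)"
    have \<rho>: "0 < \<rho>" "\<rho> \<le> \<rho>0" using \<rho>0 by (auto simp: \<rho>_def field_simps)
    have sph: "sphere (0::complex) \<rho> \<subseteq> ball 0 \<rho>1" using \<rho> \<rho>0 \<rho>1 by auto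
    have cont: "continuous_on (sphere 0 \<rho>) (\<lambda>t. norm (\<psi> t - \<psi> 0))"
      by (intro continuous_intros continuous_on_subset[OF holomorphic_on_imp_continuous_on[OF \<psi>hol] sph])
    have ne: "sphere (0::complex) \<rho> \<noteq> {}" using \<rho> by simp
    obtain t0 where t0: "t0 \<in> sphere 0 \<rho>" "\<And>t. t \<in> sphere 0 \<rho> \<Longrightarrow> norm (\<psi> t0 - \<psi> 0) \<le> norm (\<psi> t - \<psi> 0)"
      using continuous_attains_inf[OF compact_sphere ne cont] by blast
    define \<delta> where "\<delta> = norm (\<psi> t0 - \<psi> 0)"
    have "t0 \<in> ball 0 r - {0}" using t0(1) \<rho> \<rho>0 by auto
    then have \<delta>: "\<delta> > 0" using r(3) by (simp add: \<delta>_def)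
    have \<delta>le: "\<delta> \<le> norm (\<psi> t - \<psi> 0)" if "norm t = \<rho>" for t using t0(2)[of t] that by (simp add: \<delta>_def)
    have UC: "eventually (\<lambda>i. \<forall>t. norm t = \<rho> \<longrightarrow> \<delta>/2 \<le> norm (f i (a i + t *s v) - w i)) UF"
    proof (rule ccontr)
      assume "\<not> ?thesis"
      then have "eventually (\<lambda>i. \<not> (\<forall>t. norm t = \<rho> \<longrightarrow> \<delta>/2 \<le> norm (f i (a i + t *s v) - w i))) UF"
        by (rule UF_ultra)
      then have ev1: "eventually (\<lambda>i. \<exists>t. norm t = \<rho> \<and> norm (f i (a i + t *s v) - w i) < \<delta>/2) UF"
        by (rule eventually_mono) auto
      define ts where "ts i = (SOME t. norm t = \<rho> \<and> norm (f i (a i + t *s v) - w i) < \<delta>/2)" for i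
      have ets: "eventually (\<lambda>i. norm (ts i) = \<rho> \<and> norm (f i (a i + ts i *s v) - w i) < \<delta>/2) UF"
        using ev1 by (rule eventually_mono) (unfold ts_def, rule someI_ex)
      have "eventually (\<lambda>i. norm (ts i) \<le> \<rho>) UF" using ets by (rule eventually_mono) simp
      then have "hbounded U ts" unfolding hbounded_iff by blast
      then obtain ti where ti: "(ts \<longlongrightarrow> ti) UF" using bounded_conv by blast
      have n1: "((\<lambda>i. norm (ts i)) \<longlongrightarrow> norm ti) UF" by (rule tendsto_norm[OF ti])
      have n2: "((\<lambda>i. norm (ts i)) \<longlongrightarrow> \<rho>) UF"
      proof (rule Lim_transform_eventually[OF tendsto_const])
        show "eventually (\<lambda>i. \<rho> = norm (ts i)) UF" using ets by (rule eventually_mono) simp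
      qed
      have nti: "norm ti = \<rho>" using tendsto_unique[OF UF_ne n1 n2] .
      have sl: "((\<lambda>i. ts i *s v) \<longlongrightarrow> ti *s v) UF" by (rule bounded_linear.tendsto[OF bl_smult_line ti])
      have zl: "((\<lambda>i. a i + ts i *s v) \<longlongrightarrow> c + ti *s v) UF" by (rule tendsto_add[OF a_lim sl])
      have "norm (ti *s v) < R" using nti \<rho> \<rho>0 nv by (simp add: norm_smult_vec nv_def[symmetric])
        (smt (verit) mult_less_cancel_right2)
      then have xin: "c + ti *s v \<in> ball c R" by (simp add: dist_norm)
      have "((\<lambda>i. norm (f i (a i + ts i *s v) - w i)) \<longlongrightarrow> norm (\<psi> ti - \<psi> 0)) UF"
        unfolding \<psi>_def
        using tendsto_norm[OF tendsto_diff[OF gapprox[OF xin zl] wl']] by (simp add: smult_zero_vec)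
      moreover have "eventually (\<lambda>i. norm (f i (a i + ts i *s v) - w i) \<le> \<delta>/2) UF"
        using ets by (rule eventually_mono) simp
      ultimately have "norm (\<psi> ti - \<psi> 0) \<le> \<delta>/2" by (rule tendsto_upperbound[OF _ _ UF_ne])
      then show False using \<delta>le[OF nti] \<delta> by simp
    qed
    have "((\<lambda>i. f i (a i) - w i) \<longlongrightarrow> g c - g c) UF" by (rule tendsto_diff[OF fa wl'])
    from this[unfolded tendsto_iff, rule_format, of "\<delta>/2"]
    have "eventually (\<lambda>i. dist (f i (a i) - w i) (g c - g c) < \<delta>/2) UF" using \<delta> by linarith
    then have SM: "eventually (\<lambda>i. norm (f i (a i) - w i) < \<delta>/2) UF"
      by (rule eventually_mono) (simp add: dist_norm)
    show ?thesis
      using UC SM fhol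
    proof eventually_elim
      case (elim i)
      have sub2: "ball 0 \<rho>1 \<subseteq> {t. a i + t *s v \<in> ball (a i) R}"
      proof
        fix t :: complex assume "t \<in> ball 0 \<rho>1"
        then have "norm t * nv < R" using nv by (simp add: \<rho>1_def field_simps)
        then show "t \<in> {t. a i + t *s v \<in> ball (a i) R}" by (simp add: dist_norm norm_smult_vec nv_def)
      qed
      have hh: "(\<lambda>t. f i (a i + t *s v) - w i) holomorphic_on ball 0 \<rho>1"
        using holomorphic_on_subset[OF holo_on_line[OF elim(3)] sub2] by (intro holomorphic_intros)
      have "\<exists>t. norm t \<le> \<rho> \<and> f i (a i + t *s v) - w i = 0"
      proof (rule zero_exists[OF hh \<rho>(1) _ _ _])
        show "\<rho> < \<rho>1" using \<rho> \<rho>0 \<rho>1 by simp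
        show "0 < \<delta>/2" using \<delta> by simp
        show "norm (f i (a i + 0 *s v) - w i) < \<delta>/2" using elim(2) by (simp add: smult_zero_vec)
        show "\<And>t. norm t = \<rho> \<Longrightarrow> \<delta>/2 \<le> norm (f i (a i + t *s v) - w i)" using elim(1) by blast
      qed
      then show ?case by (auto simp: \<rho>_def)
    qed
  qed
  obtain tt where tt: "eventually (\<lambda>i. f i (a i + tt i *s v) = w i) UF" "(tt \<longlongrightarrow> 0) UF"
    using diag[OF \<rho>0(1) Z] by blast
  define z where "z i = a i + tt i *s v" for i
  have "((\<lambda>i. tt i *s v) \<longlongrightarrow> 0 *s v) UF" by (rule bounded_linear.tendsto[OF bl_smult_line tt(2)])
  then have "((\<lambda>i. z i - a i) \<longlongrightarrow> 0) UF" by (simp add: z_def smult_zero_vec)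
  then have "z \<in> halo U a" by (simp add: halo_def happrox_iff)
  moreover have "eqU U (happ f z) w"
    using tt(1) by (simp add: eqU_def eventually_UF happ_def z_def)
  ultimately show ?thesis by blast
qed

end

theorem theorem2p2p1:
  fixes U :: "nat set set"
    and B :: "(nat \<Rightarrow> complex ^ 'n::finite) set"
    and a :: "nat \<Rightarrow> complex ^ 'n"
    and D :: "nat \<Rightarrow> (complex ^ 'n) set"
    and f :: "nat \<Rightarrow> complex ^ 'n \<Rightarrow> complex"
  assumes U: "nonprincipal_ultrafilter U"
    and B_open: "Sopen U B"
    and aB: "a \<in> B"
    and a_bdd: "hbounded U a"
    and B_dom: "B \<subseteq> internal_set U D"
    and f_hol: "internal_holomorphic U D f"
    and f_bdd: "\<forall>z \<in> halo U a. hbounded U (happ f z)"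
  shows "\<exists>V. Sopen U V \<and> a \<in> V \<and> V \<subseteq> B
    \<and> (\<forall>z\<in>V. Scont_at U B f z)
    \<and> (\<exists>g :: complex ^ 'n \<Rightarrow> complex.
          holo_on (shadow U V) g
        \<and> (\<forall>z\<in>V. hbounded U z \<longrightarrow> hst U z \<in> shadow U V \<longrightarrow>
              happrox U (happ f z) (hstar (g (hst U z))))
        \<and> (\<forall>\<alpha> :: 'n \<Rightarrow> nat. \<forall>x \<in> shadow U V. \<forall>z \<in> halo U (hstar x).
              happrox U (happ (\<lambda>i. pdiff \<alpha> (f i)) z) (hstar (pdiff \<alpha> g x)))
        \<and> ((\<not> (\<exists>c. \<forall>x \<in> shadow U V. g x = c)) \<longrightarrow>
              (\<forall>w. happrox U w (happ f a) \<longleftrightarrow> (\<exists>z \<in> halo U a. eqU U (happ f z) w))))"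
proof -
  interpret ufl U by unfold_locales (rule U)
  obtain r0 where r0: "r0 > 0" "Sball U a r0 \<subseteq> B" using B_open aB unfolding Sopen_def by blast
  obtain r1 where r1: "r1 > 0" "eventually (\<lambda>i. cball (a i) r1 \<subseteq> D i) UF"
    using dom_ball[OF B_open aB B_dom] by blast
  obtain m :: nat where m: "eventually (\<lambda>i. \<forall>w\<in>cball (a i) (1/(real m+1)). norm (f i w) \<le> real m) UF"
    using bound_ball[OF f_bdd] by blast
  have hol: "eventually (\<lambda>i. open (D i) \<and> holo_on (D i) (f i)) UF"
    using f_hol by (simp add: internal_holomorphic_def eventually_UF)
  define R where "R = min (min r0 r1) (1/(real m+1))"
  have Rpos: "R > 0" using r0 r1 by (simp add: R_def)
  have R: "R \<le> r0" "R \<le> r1" "R \<le> 1/(real m+1)" by (auto simp: R_def)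
  interpret ufa U a R by unfold_locales (rule a_bdd, rule Rpos)
  have goodf: "Good f"
    unfolding Good_def
  proof (intro allI impI exI[of _ "real m"])
    fix r assume r: "0 < r \<and> r < R"
    show "eventually (\<lambda>i. holo_on (ball (a i) R) (f i) \<and> (\<forall>w\<in>cball (a i) r. norm (f i w) \<le> real m)) UF"
      using r1(2) m hol
    proof eventually_elim
      case (elim i)
      have "ball (a i) R \<subseteq> D i" using elim(1) R(2) by auto
      then have "holo_on (ball (a i) R) (f i)" using elim(3) holo_on_subset by blast
      moreover have "cball (a i) r \<subseteq> cball (a i) (1/(real m+1))" using r R(3) by auto
      ultimately show ?case using elim(2) by blast
    qed
  qed
  define V where "V = Sball U a R"
  define g where "g = Gcon f"
  have VB: "V \<subseteq> B"
  proof
    fix q assume "q \<in> V"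
    then obtain d where "d < R" "((\<lambda>i. norm (q i - a i)) \<longlongrightarrow> d) UF" unfolding V_def Sball_iff by blast
    then have "q \<in> Sball U a r0" unfolding Sball_iff using R(1) by (intro exI[of _ d]) auto
    then show "q \<in> B" using r0 by blast
  qed
  have gapprox: "((\<lambda>i. f i (z i)) \<longlongrightarrow> g x) UF" if "x \<in> ball c R" "(z \<longlongrightarrow> x) UF" for x z
    unfolding g_def by (rule good_approx[OF goodf that])
  have shV: "shadow U V \<subseteq> ball c R" unfolding V_def by (rule shadow_V)
  have P1: "\<forall>z\<in>V. Scont_at U B f z"
    unfolding Scont_at_def
  proof (intro ballI impI)
    fix z w assume z: "z \<in> V" and w: "w \<in> B" and wz: "happrox U w z"
    note zz = V_memD[OF z[unfolded V_def]]
    have "((\<lambda>i. (w i - z i) + z i) \<longlongrightarrow> 0 + hst U z) UF"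
      using wz zz(2) by (intro tendsto_add) (simp_all add: happrox_iff)
    then have wl: "(w \<longlongrightarrow> hst U z) UF" by simp
    have "((\<lambda>i. f i (w i) - f i (z i)) \<longlongrightarrow> g (hst U z) - g (hst U z)) UF"
      by (intro tendsto_diff gapprox zz(3) wl zz(2))
    then show "happrox U (happ f w) (happ f z)" by (simp add: happrox_iff happ_def)
  qed
  have P2: "holo_on (shadow U V) g"
    using holo_on_subset[OF good_Gcon_holo[OF goodf] shV] by (simp add: g_def)
  have P3: "\<forall>z\<in>V. hbounded U z \<longrightarrow> hst U z \<in> shadow U V \<longrightarrow> happrox U (happ f z) (hstar (g (hst U z)))"
  proof (intro ballI impI)
    fix z assume z: "z \<in> V"
    note zz = V_memD[OF z[unfolded V_def]]
    show "happrox U (happ f z) (hstar (g (hst U z)))"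
      unfolding approx_star_iff happ_def by (rule gapprox[OF zz(3) zz(2)])
  qed
  have P4: "\<forall>\<alpha> :: 'n \<Rightarrow> nat. \<forall>x \<in> shadow U V. \<forall>z \<in> halo U (hstar x).
              happrox U (happ (\<lambda>i. pdiff \<alpha> (f i)) z) (hstar (pdiff \<alpha> g x))"
  proof (intro allI ballI)
    fix \<alpha> :: "'n \<Rightarrow> nat" and x z
    assume x: "x \<in> shadow U V" and z: "z \<in> halo U (hstar x)"
    define xs where "xs = (SOME xs :: 'n list. distinct xs \<and> set xs = UNIV)"
    have xb: "x \<in> ball c R" using x shV by blast
    have zl: "(z \<longlongrightarrow> x) UF" using z by (simp add: halo_def approx_star_iff)
    note GP = good_pd[OF goodf, of \<alpha> xs]
    have "((\<lambda>i. pd_list \<alpha> xs (f i) (z i)) \<longlongrightarrow> Gcon (\<lambda>i. pd_list \<alpha> xs (f i)) x) UF"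
      by (rule good_approx[OF conjunct1[OF GP] xb zl])
    moreover have "Gcon (\<lambda>i. pd_list \<alpha> xs (f i)) x = pdiff \<alpha> g x"
      using conjunct2[OF GP] xb by (simp add: pdiff_def xs_def g_def)
    ultimately show "happrox U (happ (\<lambda>i. pdiff \<alpha> (f i)) z) (hstar (pdiff \<alpha> g x))"
      unfolding approx_star_iff happ_def by (simp add: pdiff_def xs_def)
  qed
  have P5: "(\<not> (\<exists>k. \<forall>x \<in> shadow U V. g x = k)) \<longrightarrow>
              (\<forall>w. happrox U w (happ f a) \<longleftrightarrow> (\<exists>z \<in> halo U a. eqU U (happ f z) w))"
  proof (intro impI allI iffI)
    fix w assume nc: "\<not> (\<exists>k. \<forall>x \<in> shadow U V. g x = k)" and wa: "happrox U w (happ f a)"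
    have cin: "c \<in> ball c R" using Rpos by simp
    have fa: "((\<lambda>i. f i (a i)) \<longlongrightarrow> g c) UF" by (rule gapprox[OF cin a_lim])
    have "((\<lambda>i. (w i - f i (a i)) + f i (a i)) \<longlongrightarrow> 0 + g c) UF"
      using wa fa by (intro tendsto_add) (simp_all add: happrox_iff happ_def)
    then have "(w \<longlongrightarrow> Gcon f c) UF" by (simp add: g_def)
    then show "\<exists>z\<in>halo U a. eqU U (happ f z) w"
      using part3[OF goodf _] nc by (simp add: V_def g_def)
  next
    fix w assume "\<exists>z\<in>halo U a. eqU U (happ f z) w"
    then obtain z where z: "z \<in> halo U a" "eqU U (happ f z) w" by blast
    have cin: "c \<in> ball c R" using Rpos by simp
    have fa: "((\<lambda>i. f i (a i)) \<longlongrightarrow> g c) UF" by (rule gapprox[OF cin a_lim])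
    have "((\<lambda>i. (z i - a i) + a i) \<longlongrightarrow> 0 + c) UF"
      using z(1) a_lim by (intro tendsto_add) (simp_all add: halo_def happrox_iff)
    then have zl: "(z \<longlongrightarrow> c) UF" by simp
    have fz: "((\<lambda>i. f i (z i)) \<longlongrightarrow> g c) UF" by (rule gapprox[OF cin zl])
    have "eventually (\<lambda>i. f i (z i) = w i) UF" using z(2) by (simp add: eqU_def happ_def eventually_UF)
    then have wl: "(w \<longlongrightarrow> g c) UF" by (rule Lim_transform_eventually[OF fz])
    have "((\<lambda>i. w i - f i (a i)) \<longlongrightarrow> g c - g c) UF" by (rule tendsto_diff[OF wl fa])
    then show "happrox U w (happ f a)" by (simp add: happrox_iff happ_def)
  qed
  show ?thesis
    apply (rule exI[of _ V])
    apply (intro conjI)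
        apply (simp add: V_def V_open)
       apply (simp add: V_def a_in_V)
      apply (rule VB)
     apply (rule P1)
    apply (rule exI[of _ g])
    using P2 P3 P4 P5 by blast
qed


end
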